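(* Let $t_0\overset{i_1}{-}t_1\overset{i_2}{-}\cdots\overset{i_k}{-}t_k$ be a path in $\mathbb T_n$ and let $h_1,\dots,h_k$ be integers. Then $$\prod_{j=1}^{k}L_j^{h_j}=\sum\ \prod_{j=1}^{k}\Bigg(\begin{Bmatrix}h_j+\sum_{l=j+1}^{k}\sum_{s=1}^{r_{(l)}}s\,n_s^l\,(\hat{\mathbf c}_l^+,-d_{(j)}\mathbf c_j)_{D_0R}\\ n_0^j,n_1^j,\dots,n_{r_{(j)}}^j\end{Bmatrix}\prod_{s=1}^{r_{(j)}}z_{i_j,s}^{n_s^j}\Bigg)\hat{\mathbf y}^{\sum_{j=1}^{k}\left(\sum_{s=1}^{r_{(j)}}s\,n_s^j\right)\mathbf c_j^+},$$ the sum taken over all tuples of nonnegative integers $(n_0^1,n_1^1,\dots,n_{r_{(1)}}^1;\dots;n_0^k,n_1^k,\dots,n_{r_{(k)}}^k)$ (as an identity of formal power series in $y_1,\dots,y_n$).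
   Context: Notation: $n\ge1$; $[b]_+=\max(b,0)$. For $h\in\mathbb Z$ and $n_0,\dots,n_l\in\mathbb Z_{\ge0}$, $\begin{Bmatrix}h\\ n_0,n_1,\dots,n_l\end{Bmatrix}:=\binom{h}{n_0}\binom{n_0}{n_1,\dots,n_l}$ with $\binom{h}{n_0}=h(h-1)\cdots(h-n_0+1)/n_0!$ and the multinomial coefficient taken to be $0$ if $n_0\ne n_1+\cdots+n_l$. $\mathbb T_n$: $n$-regular tree with edges labeled $1,\dots,n$, distinct labels at each vertex; $t\overset{k}{-}t'$ an edge labeled $k$; $t_0$ root. Positive integers $r_1,\dots,r_n$, $R=\mathrm{diag}(r_i)$. Formal variables $y_1,\dots,y_n$, $z_{i,s}$ ($1\le s\le r_i-1$), $z_{i,s}=z_{i,r_i-s}$, $z_{i,0}=z_{i,r_i}=1$. $B=(b_{ij})$ skew-symmetrizable integer $n\times n$; $\hat y_i=y_i\prod_jx_j^{b_{ji}}$ for variables $x_1,\dots,x_n$, $\hat{\mathbf y}^{\mathbf a}=\prod\hat y_i^{a_i}$. Matrices: $B_{t_0}=B$, $C_{t_0}=I_n$; for $t\overset{k}{-}t'$ ($\varepsilon=\pm1$, independent): $b_{ij;t'}=-b_{ij;t}$ if $i=k$ or $j=k$, else $b_{ij;t}+r_k([-\varepsilon b_{ik;t}]_+b_{kj;t}+b_{ik;t}[\varepsilon b_{kj;t}]_+)$; $c_{ij;t'}=-c_{ij;t}$ if $j=k$, else $c_{ij;t}+r_k(c_{ik;t}[\varepsilon b_{kj;t}]_++[-\varepsilon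 c_{ik;t}]_+b_{kj;t})$. The columns $\mathbf c_{k;t}$ of $C_t$ are sign-coherent (nonzero, entries all $\ge0$ or all $\le0$) with sign $\varepsilon_{k;t}$. Form: $D_0$ positive integer diagonal with $D_0RB$ skew-symmetric, $D_0R=\mathrm{diag}(d_1^{-1},\dots,d_n^{-1})$, $(\mathbf u,\mathbf v)_{D_0R}=\mathbf u^TD_0R\mathbf v$. Path data: $d_{(j)}=d_{i_j}$, $r_{(j)}=r_{i_j}$, $\mathbf c_j=\mathbf c_{i_j;t_{j-1}}$, $\mathbf c_j^+=\varepsilon_{i_j;t_{j-1}}\mathbf c_j$ (a nonzero nonnegative vector), $\hat{\mathbf c}_j^+=B\mathbf c_j^+$. $L_1=\sum_{s=0}^{r_{(1)}}z_{i_1,s}(\hat{\mathbf y}^{\mathbf c_1^+})^s$; for $2\le l\le k$, $L_l=\sum_{s=0}^{r_{(l)}}z_{i_l,s}\big(\hat{\mathbf y}^{\mathbf c_l^+}\prod_{j=1}^{l-1}L_j^{-(\hat{\mathbf c}_l^+,d_{(j)}\mathbf c_j)_{D_0R}}\big)^s$. Each $L_j$ is a formal power series in $y_1,\dots,y_n$ (coefficients Laurent polynomials in $x$ and polynomials in $z$) with constant term $1$, so all powers are defined. *)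

theory Defs
  imports Complex_Main "HOL-Library.Groups_Big_Fun"
begin

text \<open>A formal power series in the variables y_v (v :: 'n) with coefficients in a
commutative ring 'a is represented by its coefficient function on exponent vectors.\<close>

type_synonym ('n, 'a) mps = "('n \<Rightarrow> nat) \<Rightarrow> 'a"

definition ps_one :: "('n, 'a::comm_ring_1) mps" where
  "ps_one m = (if m = (\<lambda>_. 0) then 1 else 0)"

definition ps_mult :: "('n::finite, 'a::comm_ring_1) mps \<Rightarrow> ('n, 'a) mps \<Rightarrow> ('n, 'a) mps" where
  "ps_mult f g m = (\<Sum>p\<in>{p. \<forall>v. p v \<le> m v}. f p * g (\<lambda>v. m v - p v))"

primrec ps_pow :: "('n::finite, 'a::comm_ring_1) mps \<Rightarrow> nat \<Rightarrow> ('n, 'a) mps" where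
  "ps_pow f 0 = ps_one"
| "ps_pow f (Suc k) = ps_mult (ps_pow f k) f"

text \<open>Multiplicative inverse (unique when it exists, since the product is commutative).\<close>
definition ps_inv :: "('n::finite, 'a::comm_ring_1) mps \<Rightarrow> ('n, 'a) mps" where
  "ps_inv f = (THE g. ps_mult f g = ps_one)"

definition ps_powi :: "('n::finite, 'a::comm_ring_1) mps \<Rightarrow> int \<Rightarrow> ('n, 'a) mps" where
  "ps_powi f h = (if 0 \<le> h then ps_pow f (nat h) else ps_pow (ps_inv f) (nat (- h)))"

primrec ps_prod_upto :: "(nat \<Rightarrow> ('n::finite, 'a::comm_ring_1) mps) \<Rightarrow> nat \<Rightarrow> ('n, 'a) mps" where
  "ps_prod_upto F 0 = ps_one"
| "ps_prod_upto F (Suc k) = ps_mult (ps_prod_upto F k) (F (Suc k))"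

text \<open>x_j^e for an integer e, where xi j is the inverse of x j.\<close>
definition xpow :: "('n \<Rightarrow> 'a::comm_ring_1) \<Rightarrow> ('n \<Rightarrow> 'a) \<Rightarrow> 'n \<Rightarrow> int \<Rightarrow> 'a" where
  "xpow x xi j e = (if 0 \<le> e then x j ^ nat e else xi j ^ nat (- e))"

definition xmon :: "('n::finite \<Rightarrow> 'a::comm_ring_1) \<Rightarrow> ('n \<Rightarrow> 'a) \<Rightarrow> ('n \<Rightarrow> int) \<Rightarrow> 'a" where
  "xmon x xi e = (\<Prod>j\<in>UNIV. xpow x xi j (e j))"

text \<open>yhat^a = prod_i (y_i prod_j x_j^(b_ji))^(a_i) = y^a x^(B a), for a nonnegative vector a.\<close>
definition yhat :: "('n::finite \<Rightarrow> 'n \<Rightarrow> int) \<Rightarrow> ('n \<Rightarrow> 'a::comm_ring_1) \<Rightarrow> ('n \<Rightarrow> 'a)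
                    \<Rightarrow> ('n \<Rightarrow> nat) \<Rightarrow> ('n, 'a) mps" where
  "yhat B x xi a m = (if m = a then xmon x xi (\<lambda>j. \<Sum>i\<in>UNIV. B j i * int (a i)) else 0)"

definition posp :: "int \<Rightarrow> int" where "posp b = max b 0"

text \<open>Mutation in direction k with sign \<epsilon> (the result does not depend on \<epsilon>; we use \<epsilon> = 1).\<close>
definition mut_B :: "('n \<Rightarrow> nat) \<Rightarrow> int \<Rightarrow> 'n \<Rightarrow> ('n \<Rightarrow> 'n \<Rightarrow> int) \<Rightarrow> ('n \<Rightarrow> 'n \<Rightarrow> int)" where
  "mut_B r \<epsilon> k Bm i j =
     (if i = k \<or> j = k then - Bm i j
      else Bm i j + int (r k) * (posp (- \<epsilon> * Bm i k) * Bm k j + Bm i k * posp (\<epsilon> * Bm k j)))"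

definition mut_C :: "('n \<Rightarrow> nat) \<Rightarrow> int \<Rightarrow> 'n \<Rightarrow> ('n \<Rightarrow> 'n \<Rightarrow> int) \<Rightarrow> ('n \<Rightarrow> 'n \<Rightarrow> int)
                      \<Rightarrow> ('n \<Rightarrow> 'n \<Rightarrow> int)" where
  "mut_C r \<epsilon> k Bm Cm i j =
     (if j = k then - Cm i j
      else Cm i j + int (r k) * (Cm i k * posp (\<epsilon> * Bm k j) + posp (- \<epsilon> * Cm i k) * Bm k j))"

text \<open>(B_{t_j}, C_{t_j}) along the path t_0 -i_1- t_1 -i_2- ... (the label of the j-th edge is ii j).\<close>
primrec BC_path :: "('n \<Rightarrow> nat) \<Rightarrow> ('n \<Rightarrow> 'n \<Rightarrow> int) \<Rightarrow> (nat \<Rightarrow> 'n) \<Rightarrow> nat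
                    \<Rightarrow> ('n \<Rightarrow> 'n \<Rightarrow> int) \<times> ('n \<Rightarrow> 'n \<Rightarrow> int)" where
  "BC_path r B ii 0 = (B, (\<lambda>i j. if i = j then 1 else 0))"
| "BC_path r B ii (Suc j) =
     (let (Bm, Cm) = BC_path r B ii j
      in (mut_B r 1 (ii (Suc j)) Bm, mut_C r 1 (ii (Suc j)) Bm Cm))"

text \<open>c_j = c_{i_j; t_{j-1}} (for j \<ge> 1).\<close>
definition cvec :: "('n \<Rightarrow> nat) \<Rightarrow> ('n \<Rightarrow> 'n \<Rightarrow> int) \<Rightarrow> (nat \<Rightarrow> 'n) \<Rightarrow> nat \<Rightarrow> ('n \<Rightarrow> int)" where
  "cvec r B ii j = (\<lambda>m. snd (BC_path r B ii (j - 1)) m (ii j))"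

definition sign_coherent :: "('n \<Rightarrow> int) \<Rightarrow> bool" where
  "sign_coherent c \<longleftrightarrow> c \<noteq> (\<lambda>_. 0) \<and> ((\<forall>m. 0 \<le> c m) \<or> (\<forall>m. c m \<le> 0))"

definition sgn_vec :: "('n \<Rightarrow> int) \<Rightarrow> int" where
  "sgn_vec c = (if \<forall>m. 0 \<le> c m then 1 else -1)"

definition cplus :: "('n \<Rightarrow> nat) \<Rightarrow> ('n \<Rightarrow> 'n \<Rightarrow> int) \<Rightarrow> (nat \<Rightarrow> 'n) \<Rightarrow> nat \<Rightarrow> ('n \<Rightarrow> int)" where
  "cplus r B ii j = (\<lambda>m. sgn_vec (cvec r B ii j) * cvec r B ii j m)"

definition form_D0R :: "('n::finite \<Rightarrow> int) \<Rightarrow> ('n \<Rightarrow> nat) \<Rightarrow> ('n \<Rightarrow> rat) \<Rightarrow> ('n \<Rightarrow> rat) \<Rightarrow> rat" where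
  "form_D0R D0 r u v = (\<Sum>m\<in>UNIV. u m * of_int (D0 m * int (r m)) * v m)"

text \<open>d_i with D_0 R = diag(d_1^{-1}, ..., d_n^{-1}).\<close>
definition dd :: "('n \<Rightarrow> int) \<Rightarrow> ('n \<Rightarrow> nat) \<Rightarrow> 'n \<Rightarrow> rat" where
  "dd D0 r i = 1 / of_int (D0 i * int (r i))"

text \<open>Q l j = (chat_l^+, d_(j) c_j)_{D_0 R}, where chat_l^+ = B c_l^+.\<close>
definition Qpair :: "('n::finite \<Rightarrow> int) \<Rightarrow> ('n \<Rightarrow> nat) \<Rightarrow> ('n \<Rightarrow> 'n \<Rightarrow> int) \<Rightarrow> (nat \<Rightarrow> 'n)
                     \<Rightarrow> nat \<Rightarrow> nat \<Rightarrow> rat" where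
  "Qpair D0 r B ii l j =
     form_D0R D0 r (\<lambda>m. of_int (\<Sum>q\<in>UNIV. B m q * cplus r B ii l q))
                   (\<lambda>m. dd D0 r (ii j) * of_int (cvec r B ii j m))"

text \<open>The same pairing as an integer (it is an integer; see the hypothesis of the theorem).\<close>
definition Eint :: "('n::finite \<Rightarrow> int) \<Rightarrow> ('n \<Rightarrow> nat) \<Rightarrow> ('n \<Rightarrow> 'n \<Rightarrow> int) \<Rightarrow> (nat \<Rightarrow> 'n)
                     \<Rightarrow> nat \<Rightarrow> nat \<Rightarrow> int" where
  "Eint D0 r B ii l j = \<lfloor>Qpair D0 r B ii l j\<rfloor>"

text \<open>Lfam ... l j = L_j for 1 \<le> j \<le> l. L_l = sum_{s=0}^{r_(l)} z_{i_l,s} w_l^s with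
  w_l = yhat^{c_l^+} prod_{j<l} L_j^{-(chat_l^+, d_(j) c_j)}.\<close>
primrec Lfam :: "('n::finite \<Rightarrow> int) \<Rightarrow> ('n \<Rightarrow> nat) \<Rightarrow> ('n \<Rightarrow> 'n \<Rightarrow> int) \<Rightarrow> (nat \<Rightarrow> 'n)
                 \<Rightarrow> ('n \<Rightarrow> 'a::comm_ring_1) \<Rightarrow> ('n \<Rightarrow> 'a) \<Rightarrow> ('n \<Rightarrow> nat \<Rightarrow> 'a)
                 \<Rightarrow> nat \<Rightarrow> nat \<Rightarrow> ('n, 'a) mps" where
  "Lfam D0 r B ii x xi z 0 = (\<lambda>_. ps_one)"
| "Lfam D0 r B ii x xi z (Suc l) =
     (let prev = Lfam D0 r B ii x xi z l;
          w = ps_mult (yhat B x xi (\<lambda>m. nat (cplus r B ii (Suc l) m)))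
                      (ps_prod_upto (\<lambda>j. ps_powi (prev j) (- Eint D0 r B ii (Suc l) j)) l)
      in prev(Suc l := (\<lambda>mm. \<Sum>s\<in>{0..r (ii (Suc l))}. z (ii (Suc l)) s * ps_pow w s mm)))"

definition Lser :: "('n::finite \<Rightarrow> int) \<Rightarrow> ('n \<Rightarrow> nat) \<Rightarrow> ('n \<Rightarrow> 'n \<Rightarrow> int) \<Rightarrow> (nat \<Rightarrow> 'n)
                 \<Rightarrow> ('n \<Rightarrow> 'a::comm_ring_1) \<Rightarrow> ('n \<Rightarrow> 'a) \<Rightarrow> ('n \<Rightarrow> nat \<Rightarrow> 'a)
                 \<Rightarrow> nat \<Rightarrow> ('n, 'a) mps" where
  "Lser D0 r B ii x xi z j = Lfam D0 r B ii x xi z j j"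

definition multinom :: "nat \<Rightarrow> (nat \<Rightarrow> nat) \<Rightarrow> nat \<Rightarrow> int" where
  "multinom n0 ns rr =
     (if n0 = (\<Sum>s=1..rr. ns s) then int (fact n0 div (\<Prod>s=1..rr. fact (ns s))) else 0)"

text \<open>{h ; n_0, n_1, ..., n_rr} = binom(h, n_0) = h(h-1)...(h-n_0+1)/n_0! (exact division) * multinom(n_0; n_1, ..., n_rr).\<close>
definition gbin :: "int \<Rightarrow> nat \<Rightarrow> (nat \<Rightarrow> nat) \<Rightarrow> nat \<Rightarrow> int" where
  "gbin h n0 ns rr = ((\<Prod>i<n0. h - int i) div fact n0) * multinom n0 ns rr"

text \<open>Index set of tuples (n^j_s)_{1\<le>j\<le>k, 0\<le>s\<le>r_(j)}, encoded as functions nat \<Rightarrow> nat \<Rightarrow> nat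
  vanishing outside the index range.\<close>
definition tuples :: "('n \<Rightarrow> nat) \<Rightarrow> (nat \<Rightarrow> 'n) \<Rightarrow> nat \<Rightarrow> (nat \<Rightarrow> nat \<Rightarrow> nat) set" where
  "tuples r ii k = {nn. \<forall>j s. (j < 1 \<or> k < j \<or> r (ii j) < s) \<longrightarrow> nn j s = 0}"

definition rhs_term :: "('n::finite \<Rightarrow> int) \<Rightarrow> ('n \<Rightarrow> nat) \<Rightarrow> ('n \<Rightarrow> 'n \<Rightarrow> int) \<Rightarrow> (nat \<Rightarrow> 'n)
                 \<Rightarrow> ('n \<Rightarrow> 'a::comm_ring_1) \<Rightarrow> ('n \<Rightarrow> 'a) \<Rightarrow> ('n \<Rightarrow> nat \<Rightarrow> 'a)
                 \<Rightarrow> nat \<Rightarrow> (nat \<Rightarrow> int) \<Rightarrow> (nat \<Rightarrow> nat \<Rightarrow> nat) \<Rightarrow> ('n, 'a) mps" where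
  "rhs_term D0 r B ii x xi z k h nn mm =
     (\<Prod>j=1..k.
        of_int (gbin (h j + (\<Sum>l=j+1..k. \<Sum>s=1..r (ii l).
                                int s * int (nn l s) * (- Eint D0 r B ii l j)))
                     (nn j 0) (nn j) (r (ii j)))
        * (\<Prod>s=1..r (ii j). z (ii j) s ^ nn j s))
     * yhat B x xi (\<lambda>m. \<Sum>j=1..k. (\<Sum>s=1..r (ii j). s * nn j s) * nat (cplus r B ii j m)) mm"

end

theory Submission
  imports Defs "HOL-Computational_Algebra.Formal_Power_Series"
begin

typedef ('n, 'a) mp = "UNIV :: (('n \<Rightarrow> nat) \<Rightarrow> 'a) set" by auto

lemma Abs_mp_inv [simp]: "Rep_mp (Abs_mp f) = f"
  by (simp add: Abs_mp_inverse)

lemma mp_eqI: "(\<And>m. Rep_mp f m = Rep_mp g m) \<Longrightarrow> f = g"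
  by (metis Rep_mp_inject ext)

definition Dn :: "('n \<Rightarrow> nat) \<Rightarrow> ('n \<Rightarrow> nat) set" where
  "Dn m = {p. \<forall>v. p v \<le> m v}"

lemma finite_Dn [simp]: "finite (Dn (m :: 'n::finite \<Rightarrow> nat))"
proof -
  have "Dn m \<subseteq> {f. \<forall>x. (x \<in> UNIV \<longrightarrow> f x \<in> {0..Max (range m)}) \<and> (x \<notin> UNIV \<longrightarrow> f x = 0)}"
  proof
    fix p assume "p \<in> Dn m"
    hence "\<forall>x. p x \<le> m x" by (simp add: Dn_def)
    moreover have "\<forall>x. m x \<le> Max (range m)" by (simp add: Max_ge)
    ultimately have "\<forall>x. p x \<le> Max (range m)" using le_trans by blast
    then show "p \<in> {f. \<forall>x. (x \<in> UNIV \<longrightarrow> f x \<in> {0..Max (range m)}) \<and> (x \<notin> UNIV \<longrightarrow> f x = 0)}"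
      by auto
  qed
  moreover have "finite {f. \<forall>x. (x \<in> (UNIV::'n set) \<longrightarrow> f x \<in> {0..Max (range m)}) \<and> (x \<notin> UNIV \<longrightarrow> f x = (0::nat))}"
    by (rule finite_set_of_finite_funs) auto
  ultimately show ?thesis by (rule finite_subset)
qed

lemma ps_mult_Dn: "ps_mult f g m = (\<Sum>p\<in>Dn m. f p * g (\<lambda>v. m v - p v))"
  by (simp add: ps_mult_def Dn_def)


lemma ps_mult_comm: "ps_mult f g = (ps_mult g f :: ('n::finite, 'a::comm_ring_1) mps)"
proof
  fix m
  show "ps_mult f g m = ps_mult g f m"
    unfolding ps_mult_Dn
    by (rule sum.reindex_bij_witness[of _ "\<lambda>p v. m v - p v" "\<lambda>p v. m v - p v"])
       (auto simp: Dn_def mult.commute)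
qed

lemma ps_mult_assoc:
  "ps_mult (ps_mult f g) h = ps_mult f (ps_mult g h :: ('n::finite, 'a::comm_ring_1) mps)"
proof
  fix m
  have "ps_mult (ps_mult f g) h m
     = (\<Sum>p\<in>Dn m. \<Sum>q\<in>{q. q \<in> Dn m \<and> (\<forall>v. q v \<le> p v)}. f q * g (\<lambda>v. p v - q v) * h (\<lambda>v. m v - p v))"
    unfolding ps_mult_Dn sum_distrib_right
  proof (rule sum.cong[OF refl], rule sum.cong)
    fix p assume "p \<in> Dn m"
    then show "Dn p = {q. q \<in> Dn m \<and> (\<forall>v. q v \<le> p v)}"
      unfolding Dn_def using le_trans by blast
  qed simp
  also have "\<dots> = (\<Sum>q\<in>Dn m. \<Sum>p\<in>{p. p \<in> Dn m \<and> (\<forall>v. q v \<le> p v)}. f q * g (\<lambda>v. p v - q v) * h (\<lambda>v. m v - p v))"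
    by (rule sum.swap_restrict) auto
  also have "\<dots> = ps_mult f (ps_mult g h) m"
    unfolding ps_mult_Dn sum_distrib_left
  proof (rule sum.cong[OF refl])
    fix q assume q: "q \<in> Dn m"
    show "(\<Sum>p\<in>{p. p \<in> Dn m \<and> (\<forall>v. q v \<le> p v)}. f q * g (\<lambda>v. p v - q v) * h (\<lambda>v. m v - p v))
        = (\<Sum>u\<in>Dn (\<lambda>v. m v - q v). f q * (g u * h (\<lambda>v. m v - q v - u v)))"
    proof (rule sum.reindex_bij_witness[of _ "\<lambda>u v. q v + u v" "\<lambda>p v. p v - q v"])
      fix u assume "u \<in> Dn (\<lambda>v. m v - q v)"
      then have u: "\<forall>v. u v \<le> m v - q v" by (simp add: Dn_def)
      show "(\<lambda>v. q v + u v - q v) = u" by simp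
      have q': "\<forall>v. q v \<le> m v" using q by (simp add: Dn_def)
      have "q v + u v \<le> m v" for v using spec[OF u, of v] spec[OF q', of v] by arith
      then show "(\<lambda>v. q v + u v) \<in> {p. p \<in> Dn m \<and> (\<forall>v. q v \<le> p v)}"
        by (auto simp: Dn_def)
    next
      fix p assume "p \<in> {p. p \<in> Dn m \<and> (\<forall>v. q v \<le> p v)}"
      then have p: "\<forall>v. p v \<le> m v" "\<forall>v. q v \<le> p v" by (auto simp: Dn_def)
      show "(\<lambda>v. q v + (p v - q v)) = p" using p by auto
      show "(\<lambda>v. p v - q v) \<in> Dn (\<lambda>v. m v - q v)" using p by (auto simp: Dn_def diff_le_mono)
      have "(\<lambda>v. m v - q v - (p v - q v)) = (\<lambda>v. m v - p v)"
      proof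
        fix v show "m v - q v - (p v - q v) = m v - p v" using spec[OF p(1), of v] spec[OF p(2), of v] by arith
      qed
      then show "f q * (g (\<lambda>v. p v - q v) * h (\<lambda>v. m v - q v - (p v - q v))) = f q * g (\<lambda>v. p v - q v) * h (\<lambda>v. m v - p v)"
        by (simp add: mult.assoc)
    qed
  qed
  finally show "ps_mult (ps_mult f g) h m = ps_mult f (ps_mult g h) m" .
qed

lemma ps_mult_one: "ps_mult ps_one f = (f :: ('n::finite, 'a::comm_ring_1) mps)"
proof
  fix m
  have "ps_mult ps_one f m = (\<Sum>p\<in>Dn m. if p = (\<lambda>_. 0) then f m else 0)"
    unfolding ps_mult_Dn ps_one_def by (rule sum.cong) auto
  also have "\<dots> = (if (\<lambda>_. 0) \<in> Dn m then f m else 0)" by (rule sum.delta[OF finite_Dn])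
  also have "\<dots> = f m" by (simp add: Dn_def)
  finally show "ps_mult ps_one f m = f m" .
qed

lemma ps_mult_distrib: "ps_mult (\<lambda>m. f m + g m) h = (\<lambda>m. ps_mult f h m + ps_mult g h m)"
  by (auto simp: ps_mult_Dn distrib_right sum.distrib)

instantiation mp :: (finite, comm_ring_1) comm_ring_1
begin
definition "zero_mp = Abs_mp (\<lambda>_. 0)"
definition "one_mp = Abs_mp ps_one"
definition "plus_mp f g = Abs_mp (\<lambda>m. Rep_mp f m + Rep_mp g m)"
definition "minus_mp f g = Abs_mp (\<lambda>m. Rep_mp f m - Rep_mp g m)"
definition "uminus_mp f = Abs_mp (\<lambda>m. - Rep_mp f m)"
definition "times_mp f g = Abs_mp (ps_mult (Rep_mp f) (Rep_mp g))"
instance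
proof
  fix a b c :: "('a, 'b) mp"
  show "a * b * c = a * (b * c)" by (simp add: times_mp_def ps_mult_assoc)
  show "a * b = b * a" by (simp add: times_mp_def ps_mult_comm)
  show "1 * a = a" by (simp add: times_mp_def one_mp_def ps_mult_one Rep_mp_inverse)
  show "(a + b) * c = a * c + b * c"
    by (simp add: times_mp_def plus_mp_def ps_mult_distrib)
  show "a + b + c = a + (b + c)" by (rule mp_eqI) (simp add: plus_mp_def add.assoc)
  show "a + b = b + a" by (rule mp_eqI) (simp add: plus_mp_def add.commute)
  show "0 + a = a" by (rule mp_eqI) (simp add: plus_mp_def zero_mp_def)
  show "- a + a = 0" by (rule mp_eqI) (simp add: plus_mp_def zero_mp_def uminus_mp_def)
  show "a - b = a + - b" by (rule mp_eqI) (simp add: plus_mp_def minus_mp_def uminus_mp_def)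
  show "(0::('a, 'b) mp) \<noteq> 1"
    by (metis Abs_mp_inv one_mp_def zero_mp_def ps_one_def zero_neq_one)
qed
end

abbreviation cf :: "('n, 'a) mp \<Rightarrow> ('n \<Rightarrow> nat) \<Rightarrow> 'a" where "cf \<equiv> Rep_mp"

lemma cf_zero [simp]: "cf (0 :: ('n::finite, 'a::comm_ring_1) mp) m = 0"
  by (simp add: zero_mp_def)
lemma cf_one: "cf (1 :: ('n::finite, 'a::comm_ring_1) mp) = ps_one"
  by (simp add: one_mp_def)
lemma cf_plus [simp]: "cf (f + g :: ('n::finite, 'a::comm_ring_1) mp) m = cf f m + cf g m"
  by (simp add: plus_mp_def)
lemma cf_minus [simp]: "cf (f - g :: ('n::finite, 'a::comm_ring_1) mp) m = cf f m - cf g m"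
  by (simp add: minus_mp_def)
lemma cf_uminus [simp]: "cf (- f :: ('n::finite, 'a::comm_ring_1) mp) m = - cf f m"
  by (simp add: uminus_mp_def)
lemma cf_times: "cf (f * g :: ('n::finite, 'a::comm_ring_1) mp) = ps_mult (cf f) (cf g)"
  by (simp add: times_mp_def)
lemma cf_sum: "cf (\<Sum>i\<in>A. F i :: ('n::finite, 'a::comm_ring_1) mp) m = (\<Sum>i\<in>A. cf (F i) m)"
  by (induction A rule: infinite_finite_induct) auto

lemma ps_pow_cf: "ps_pow f n = cf (Abs_mp f ^ n :: ('n::finite, 'a::comm_ring_1) mp)"
  by (induction n) (simp_all add: cf_one cf_times power_Suc2 del: power_Suc)

lemma ps_prod_upto_cf:
  "ps_prod_upto F k = cf (\<Prod>j\<in>{1..k}. Abs_mp (F j) :: ('n::finite, 'a::comm_ring_1) mp)"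
proof (induction k)
  case 0 then show ?case by (simp add: cf_one)
next
  case (Suc k)
  have "{1..Suc k} = insert (Suc k) {1..k}" by auto
  then show ?case using Suc by (simp add: cf_times) (rule ps_mult_comm)
qed

abbreviation z0 :: "'n \<Rightarrow> nat" where "z0 \<equiv> (\<lambda>_. 0)"

lemma cf_times_0: "cf (f * g :: ('n::finite, 'a::comm_ring_1) mp) z0 = cf f z0 * cf g z0"
proof -
  have "Dn (z0 :: 'n \<Rightarrow> nat) = {z0}" by (auto simp: Dn_def)
  then show ?thesis by (simp add: cf_times ps_mult_Dn)
qed

lemma cf_power_0: "cf (f ^ n :: ('n::finite, 'a::comm_ring_1) mp) z0 = cf f z0 ^ n"
  by (induction n) (simp_all add: cf_one ps_one_def cf_times_0 mult.commute)

definition const :: "'a \<Rightarrow> ('n::finite, 'a::comm_ring_1) mp" where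
  "const c = Abs_mp (\<lambda>m. if m = z0 then c else 0)"

lemma cf_const_mult [simp]: "cf (const c * f) m = c * cf f m"
proof -
  have "cf (const c * f) m = (\<Sum>p\<in>Dn m. if p = z0 then c * cf f m else 0)"
    unfolding cf_times ps_mult_Dn const_def by (rule sum.cong) auto
  also have "\<dots> = (if z0 \<in> Dn m then c * cf f m else 0)" by (rule sum.delta[OF finite_Dn])
  also have "\<dots> = c * cf f m" by (simp add: Dn_def)
  finally show ?thesis .
qed

lemma const_one [simp]: "const 1 = 1"
  by (rule mp_eqI) (simp add: const_def cf_one ps_one_def)

lemma const_mult: "const (a * b) = (const a * const b :: ('n::finite, 'a::comm_ring_1) mp)"
  by (rule mp_eqI) (simp only: cf_const_mult, simp add: const_def)

lemma const_add: "const (a + b) = (const a + const b :: ('n::finite, 'a::comm_ring_1) mp)"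
  by (rule mp_eqI) (simp add: const_def)

lemma const_zero [simp]: "const 0 = (0 :: ('n::finite, 'a::comm_ring_1) mp)"
  by (rule mp_eqI) (simp add: const_def)

lemma const_of_nat: "const (of_nat k) = (of_nat k :: ('n::finite, 'a::comm_ring_1) mp)"
  by (induction k) (simp_all add: const_add)

lemma const_prod: "const (\<Prod>i\<in>A. f i) = (\<Prod>i\<in>A. const (f i) :: ('n::finite, 'a::comm_ring_1) mp)"
  by (induction A rule: infinite_finite_induct) (simp_all add: const_mult)

lemma const_power: "const (a ^ n) = (const a ^ n :: ('n::finite, 'a::comm_ring_1) mp)"
  by (induction n) (simp_all add: const_mult)

definition deg :: "('n::finite \<Rightarrow> nat) \<Rightarrow> nat" where "deg m = (\<Sum>v\<in>UNIV. m v)"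

lemma deg_split: "p \<in> Dn m \<Longrightarrow> deg m = deg p + deg (\<lambda>v. m v - p v)"
  by (auto simp: deg_def Dn_def sum.distrib[symmetric] intro!: sum.cong)

lemma deg_pos: "m \<noteq> z0 \<Longrightarrow> 0 < deg (m :: 'n::finite \<Rightarrow> nat)"
  by (auto simp: deg_def)

lemma power_cf_vanish:
  assumes X0: "cf X z0 = 0" and nz: "cf (X ^ n :: ('n::finite, 'a::comm_ring_1) mp) m \<noteq> 0"
  shows "n \<le> deg m"
  using nz
proof (induction n arbitrary: m)
  case 0 then show ?case by simp
next
  case (Suc n)
  have "cf (X ^ n * X) m \<noteq> 0" using Suc.prems by (simp add: mult.commute)
  then obtain p where p: "p \<in> Dn m" "cf (X ^ n) p \<noteq> 0" "cf X (\<lambda>v. m v - p v) \<noteq> 0"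
    unfolding cf_times ps_mult_Dn by (metis (no_types, lifting) mult_not_zero sum.neutral)
  from p(3) X0 have "(\<lambda>v. m v - p v) \<noteq> z0" by auto
  then have "0 < deg (\<lambda>v. m v - p v)" by (rule deg_pos)
  moreover have "n \<le> deg p" using Suc.IH p(2) by blast
  ultimately show ?case using deg_split[OF p(1)] by linarith
qed

definition lf :: "'i set \<Rightarrow> ('i \<Rightarrow> ('n, 'a::zero) mp) \<Rightarrow> bool" where
  "lf A F \<longleftrightarrow> (\<forall>m. finite {i\<in>A. cf (F i) m \<noteq> 0})"

definition psum :: "'i set \<Rightarrow> ('i \<Rightarrow> ('n, 'a::comm_monoid_add) mp) \<Rightarrow> ('n, 'a) mp" where
  "psum A F = Abs_mp (\<lambda>m. \<Sum>i\<in>{i\<in>A. cf (F i) m \<noteq> 0}. cf (F i) m)"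

lemma cf_psum:
  assumes "finite T" "{i\<in>A. cf (F i) m \<noteq> 0} \<subseteq> T" "T \<subseteq> A"
  shows "cf (psum A F) m = (\<Sum>i\<in>T. cf (F i) m)"
  unfolding psum_def Abs_mp_inv
  by (rule sum.mono_neutral_left) (use assms in auto)

lemma psum_cong: "(\<And>i. i \<in> A \<Longrightarrow> F i = G i) \<Longrightarrow> psum A F = psum A G"
  unfolding psum_def by (rule arg_cong[where f=Abs_mp], rule ext, rule sum.cong) auto

lemma lf_cong: "(\<And>i. i \<in> A \<Longrightarrow> F i = G i) \<Longrightarrow> lf A F = lf A G"
  unfolding lf_def
proof -
  assume "\<And>i. i \<in> A \<Longrightarrow> F i = G i"
  then have "\<And>m. {i \<in> A. cf (F i) m \<noteq> 0} = {i \<in> A. cf (G i) m \<noteq> 0}" by auto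
  then show "(\<forall>m. finite {i \<in> A. cf (F i) m \<noteq> 0}) = (\<forall>m. finite {i \<in> A. cf (G i) m \<noteq> 0})" by simp
qed

lemma psum_finite:
  assumes "finite A"
  shows "psum A F = (\<Sum>i\<in>A. F i :: ('n::finite, 'a::comm_ring_1) mp)" "lf A F"
proof -
  show "psum A F = (\<Sum>i\<in>A. F i)"
    by (rule mp_eqI) (subst cf_psum[of A], use assms in \<open>auto simp: cf_sum\<close>)
  show "lf A F" using assms by (simp add: lf_def)
qed

lemma psum_mult:
  fixes F :: "'i \<Rightarrow> ('n::finite, 'a::comm_ring_1) mp"
  assumes "lf A F"
  shows "lf A (\<lambda>i. F i * G)" "psum A F * G = psum A (\<lambda>i. F i * G)"
proof -
  define T where "T m = (\<Union>p\<in>Dn m. {i\<in>A. cf (F i) p \<noteq> 0})" for m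
  have finT: "finite (T m)" for m using assms by (auto simp: T_def lf_def)
  have sub: "{i\<in>A. cf (F i * G) m \<noteq> 0} \<subseteq> T m" for m
  proof
    fix i assume "i \<in> {i\<in>A. cf (F i * G) m \<noteq> 0}"
    then have "i \<in> A" "(\<Sum>p\<in>Dn m. cf (F i) p * cf G (\<lambda>v. m v - p v)) \<noteq> 0"
      by (auto simp: cf_times ps_mult_Dn)
    then obtain p where "p \<in> Dn m" "cf (F i) p \<noteq> 0"
      by (metis (no_types, lifting) mult_not_zero sum.neutral)
    with \<open>i \<in> A\<close> show "i \<in> T m" by (auto simp: T_def)
  qed
  show "lf A (\<lambda>i. F i * G)" unfolding lf_def using sub finT by (meson finite_subset)
  show "psum A F * G = psum A (\<lambda>i. F i * G)"
  proof (rule mp_eqI)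
    fix m
    have TA: "T m \<subseteq> A" by (auto simp: T_def)
    have "cf (psum A F * G) m = (\<Sum>p\<in>Dn m. cf (psum A F) p * cf G (\<lambda>v. m v - p v))"
      by (simp add: cf_times ps_mult_Dn)
    also have "\<dots> = (\<Sum>p\<in>Dn m. (\<Sum>i\<in>T m. cf (F i) p) * cf G (\<lambda>v. m v - p v))"
    proof (rule sum.cong[OF refl])
      fix p assume "p \<in> Dn m"
      then have "{i\<in>A. cf (F i) p \<noteq> 0} \<subseteq> T m" by (auto simp: T_def)
      then show "cf (psum A F) p * cf G (\<lambda>v. m v - p v) = (\<Sum>i\<in>T m. cf (F i) p) * cf G (\<lambda>v. m v - p v)"
        by (subst cf_psum[OF finT _ TA]) auto
    qed
    also have "\<dots> = (\<Sum>i\<in>T m. cf (F i * G) m)"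
      by (simp add: cf_times ps_mult_Dn sum_distrib_right) (rule sum.swap)
    also have "\<dots> = cf (psum A (\<lambda>i. F i * G)) m"
      by (rule cf_psum[symmetric, OF finT sub TA])
    finally show "cf (psum A F * G) m = cf (psum A (\<lambda>i. F i * G)) m" .
  qed
qed

lemma psum_mult_left:
  fixes F :: "'i \<Rightarrow> ('n::finite, 'a::comm_ring_1) mp"
  assumes "lf A F"
  shows "lf A (\<lambda>i. G * F i)" "G * psum A F = psum A (\<lambda>i. G * F i)"
  using psum_mult[OF assms, of G] by (simp_all add: mult.commute)

lemma psum_Sigma:
  fixes F :: "'i \<Rightarrow> 'j \<Rightarrow> ('n::finite, 'a::comm_ring_1) mp"
  assumes L: "lf (Sigma A B) (\<lambda>(i, j). F i j)"
  shows "psum (Sigma A B) (\<lambda>(i, j). F i j) = psum A (\<lambda>i. psum (B i) (F i))"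
    "lf A (\<lambda>i. psum (B i) (F i))" "\<And>i. i \<in> A \<Longrightarrow> lf (B i) (F i)"
proof -
  define S where "S m = {x \<in> Sigma A B. cf (case x of (i, j) \<Rightarrow> F i j) m \<noteq> 0}" for m
  have finS: "finite (S m)" for m using L by (simp add: lf_def S_def)
  have inner: "{j \<in> B i. cf (F i j) m \<noteq> 0} = (\<lambda>x. snd x) ` (S m \<inter> {x. fst x = i})" if "i \<in> A" for i m
    using that by (force simp: S_def image_iff)
  show lfi: "lf (B i) (F i)" if "i \<in> A" for i
    unfolding lf_def inner[OF that] using finS by auto
  have cfi: "cf (psum (B i) (F i)) m = (\<Sum>j\<in>{j. (i, j) \<in> S m}. cf (F i j) m)" if "i \<in> A" for i m
  proof -
    have e: "{j. (i, j) \<in> S m} = {j \<in> B i. cf (F i j) m \<noteq> 0}" using that by (auto simp: S_def)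
    show ?thesis unfolding e
      by (rule cf_psum) (use lfi[OF that] in \<open>auto simp: lf_def\<close>)
  qed
  have outer: "{i \<in> A. cf (psum (B i) (F i)) m \<noteq> 0} \<subseteq> fst ` S m" for m
  proof
    fix i assume i: "i \<in> {i \<in> A. cf (psum (B i) (F i)) m \<noteq> 0}"
    then have "(\<Sum>j\<in>{j. (i, j) \<in> S m}. cf (F i j) m) \<noteq> 0" using cfi by auto
    then obtain j where "(i, j) \<in> S m" by (metis (no_types, lifting) empty_Collect_eq sum.empty)
    then show "i \<in> fst ` S m" by force
  qed
  show "lf A (\<lambda>i. psum (B i) (F i))"
    unfolding lf_def using outer finS by (meson finite_imageI finite_subset)
  show "psum (Sigma A B) (\<lambda>(i, j). F i j) = psum A (\<lambda>i. psum (B i) (F i))"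
  proof (rule mp_eqI)
    fix m
    have SA: "fst ` S m \<subseteq> A" by (auto simp: S_def)
    have fin2: "finite {j. (i, j) \<in> S m}" for i
      by (rule finite_subset[of _ "snd ` S m"]) (force, simp add: finS)
    have "cf (psum A (\<lambda>i. psum (B i) (F i))) m = (\<Sum>i\<in>fst ` S m. cf (psum (B i) (F i)) m)"
      by (rule cf_psum[OF _ outer SA]) (simp add: finS)
    also have "\<dots> = (\<Sum>i\<in>fst ` S m. \<Sum>j\<in>{j. (i, j) \<in> S m}. cf (F i j) m)"
      by (rule sum.cong) (use SA cfi in auto)
    also have "\<dots> = (\<Sum>x\<in>Sigma (fst ` S m) (\<lambda>i. {j. (i, j) \<in> S m}). case x of (i, j) \<Rightarrow> cf (F i j) m)"
      by (subst sum.Sigma) (use finS fin2 in auto)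
    also have "\<dots> = (\<Sum>x\<in>Sigma (fst ` S m) (\<lambda>i. {j. (i, j) \<in> S m}). cf (case x of (i, j) \<Rightarrow> F i j) m)"
      by (rule sum.cong) (auto split: prod.splits)
    also have "Sigma (fst ` S m) (\<lambda>i. {j. (i, j) \<in> S m}) = S m" by force
    also have "(\<Sum>x\<in>S m. cf (case x of (i, j) \<Rightarrow> F i j) m) = cf (psum (Sigma A B) (\<lambda>(i, j). F i j)) m"
      by (rule cf_psum[symmetric, OF finS]) (auto simp: S_def)
    finally show "cf (psum (Sigma A B) (\<lambda>(i, j). F i j)) m = cf (psum A (\<lambda>i. psum (B i) (F i))) m" ..
  qed
qed

lemma psum_reindex:
  fixes F :: "'i \<Rightarrow> ('n::finite, 'a::comm_ring_1) mp"
  assumes "bij_betw g A' A"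
  shows "psum A F = psum A' (\<lambda>i. F (g i))" "lf A F = lf A' (\<lambda>i. F (g i))"
proof -
  have eq: "{i\<in>A. cf (F i) m \<noteq> 0} = g ` {i\<in>A'. cf (F (g i)) m \<noteq> 0}" for m
    using assms by (auto simp: bij_betw_def)
  have inj: "inj_on g {i\<in>A'. cf (F (g i)) m \<noteq> 0}" for m
    using assms by (auto simp: bij_betw_def intro: inj_on_subset)
  show "lf A F = lf A' (\<lambda>i. F (g i))"
    unfolding lf_def eq using inj finite_image_iff by blast
  show "psum A F = psum A' (\<lambda>i. F (g i))"
    unfolding psum_def eq by (simp add: sum.reindex[OF inj])
qed

lemma psum_zero_ext:
  fixes F :: "'i \<Rightarrow> ('n::finite, 'a::comm_ring_1) mp"
  assumes "A \<subseteq> A'" "\<And>i. i \<in> A' - A \<Longrightarrow> F i = 0"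
  shows "psum A' F = psum A F" "lf A' F = lf A F"
proof -
  have eq: "{i\<in>A'. cf (F i) m \<noteq> 0} = {i\<in>A. cf (F i) m \<noteq> 0}" for m
    using assms by fastforce
  show "psum A' F = psum A F" "lf A' F = lf A F" unfolding psum_def lf_def eq by simp_all
qed

lemma psum_single:
  fixes F :: "'i \<Rightarrow> ('n::finite, 'a::comm_ring_1) mp"
  assumes "a \<in> A" "\<And>i. i \<in> A - {a} \<Longrightarrow> F i = 0"
  shows "psum A F = F a" "lf A F"
  using psum_zero_ext[of "{a}" A F] psum_finite[of "{a}" F] assms by auto

lemma lf_powers:
  fixes X :: "('n::finite, 'a::comm_ring_1) mp"
    and e :: "'i \<Rightarrow> nat"
  assumes X0: "cf X z0 = 0" and that: "\<And>m :: 'n \<Rightarrow> nat. finite {n\<in>A. e n \<le> deg m}"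
  shows "lf A (\<lambda>n. const (c n) * X ^ (e n))"
  unfolding lf_def
proof
  fix m
  have "{n\<in>A. cf (const (c n) * X ^ (e n)) m \<noteq> 0} \<subseteq> {n\<in>A. e n \<le> deg m}"
  proof
    fix n assume "n \<in> {n\<in>A. cf (const (c n) * X ^ (e n)) m \<noteq> 0}"
    then have "n \<in> A" "cf (X ^ e n) m \<noteq> 0" by auto
    then show "n \<in> {n\<in>A. e n \<le> deg m}" using power_cf_vanish[OF X0] by blast
  qed
  then show "finite {n\<in>A. cf (const (c n) * X ^ (e n)) m \<noteq> 0}"
    using that[of m] by (rule finite_subset)
qed

lemma const_sum: "const (\<Sum>i\<in>A. f i) = (\<Sum>i\<in>A. const (f i) :: ('n::finite, 'a::comm_ring_1) mp)"
  by (induction A rule: infinite_finite_induct) (simp_all add: const_add)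

definition ib :: "int \<Rightarrow> nat \<Rightarrow> int" where "ib h n = (\<Prod>i<n. h - int i) div fact n"

lemma of_int_ib: "(of_int (ib h n) :: rat) = of_int h gchoose n"
proof -
  note e = gbinomial_int_mult_fact'[of h n]
  have "(\<Prod>i<n. h - int i) = (\<Prod>i = 0..<n. h - int i)" by (simp add: lessThan_atLeast0)
  then have "ib h n = (\<Prod>i = 0..<n. h - int i) div fact n" by (simp add: ib_def)
  then show ?thesis unfolding e[symmetric] by (simp add: of_int_gbinomial)
qed

lemma ib_zero: "ib h n = 0" if "0 \<le> h" "h < int n"
proof -
  have "(\<Prod>i<n. h - int i) = 0"
    by (rule prod_zero[OF finite_lessThan]) (use that in \<open>auto intro!: bexI[of _ "nat h"]\<close>)
  then show ?thesis unfolding ib_def by (simp only: div_0)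
qed

lemma ib_0 [simp]: "ib h 0 = 1" by (simp add: ib_def)
lemma ib_1 [simp]: "ib h 1 = h" by (simp add: ib_def)
lemma ib_Suc0 [simp]: "ib h (Suc 0) = h" by (simp add: ib_def)

definition bser :: "('n::finite, 'a::comm_ring_1) mp \<Rightarrow> int \<Rightarrow> ('n, 'a) mp" where
  "bser X h = psum UNIV (\<lambda>n. const (of_int (ib h n)) * X ^ n)"

lemma lf_bser:
  fixes X :: "('n::finite, 'a::comm_ring_1) mp"
  assumes X0: "cf X z0 = 0"
  shows "lf UNIV (\<lambda>n. const (c n) * X ^ n)"
  by (rule lf_powers[OF X0, where e="\<lambda>n. n"]) simp

lemma ib_Vandermonde:
  "(\<Sum>k\<in>{0..n}. ib a k * ib b (n - k)) = ib (a + b) n"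
proof -
  have "(of_int (\<Sum>k\<in>{0..n}. ib a k * ib b (n - k)) :: rat)
      = (\<Sum>k\<in>{0..n}. (of_int a gchoose k) * (of_int b gchoose (n - k)))"
    by (simp add: of_int_ib)
  also have "\<dots> = (of_int a + of_int b) gchoose n" by (rule gbinomial_Vandermonde)
  also have "\<dots> = of_int (ib (a + b) n)" by (simp add: of_int_ib)
  finally show ?thesis by (simp only: of_int_eq_iff)
qed

lemma bser_add:
  fixes X :: "('n::finite, 'a::comm_ring_1) mp"
  assumes X0: "cf X z0 = 0"
  shows "bser X a * bser X b = bser X (a + b)"
proof -
  define ca where "ca n = (of_int (ib a n) :: 'a)" for n
  define cb where "cb n = (of_int (ib b n) :: 'a)" for n
  have fin: "finite {x \<in> UNIV \<times> UNIV. fst x + snd x \<le> deg m}" for m :: "'n \<Rightarrow> nat"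
    by (rule finite_subset[of _ "{..deg m} \<times> {..deg m}"]) auto
  have L1: "lf (UNIV \<times> UNIV) (\<lambda>(i, j). const (ca i * cb j) * X ^ (i + j))"
  proof -
    have "lf (UNIV \<times> UNIV) (\<lambda>x. const (ca (fst x) * cb (snd x)) * X ^ (fst x + snd x))"
      by (rule lf_powers[OF X0, where e="\<lambda>x. fst x + snd x"]) (rule fin)
    then show ?thesis by (simp add: case_prod_beta')
  qed
  define g :: "nat \<times> nat \<Rightarrow> nat \<times> nat" where "g = (\<lambda>(n, i). (i, n - i))"
  have bij: "bij_betw g (Sigma UNIV (\<lambda>n. {0..n})) (UNIV \<times> UNIV)"
    by (rule bij_betw_byWitness[where f'="\<lambda>(i, j). (i + j, i)"]) (auto simp: g_def image_def)
  have L2: "lf (Sigma UNIV (\<lambda>n. {0..n})) (\<lambda>(n, i). const (ca i * cb (n - i)) * X ^ n)"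
  proof -
    have "lf (Sigma UNIV (\<lambda>n. {0..n})) (\<lambda>x. (\<lambda>(i, j). const (ca i * cb j) * X ^ (i + j)) (g x))"
      using psum_reindex(2)[OF bij] L1 by blast
    then show ?thesis by (rule iffD1[OF lf_cong, rotated]) (auto simp: g_def)
  qed
  have "bser X a * bser X b = psum UNIV (\<lambda>i. const (ca i) * X ^ i * bser X b)"
    unfolding bser_def ca_def by (rule psum_mult(2)[OF lf_bser[OF X0]])
  also have "\<dots> = psum UNIV (\<lambda>i. psum UNIV (\<lambda>j. const (ca i * cb j) * X ^ (i + j)))"
  proof (rule psum_cong)
    fix i
    show "const (ca i) * X ^ i * bser X b = psum UNIV (\<lambda>j. const (ca i * cb j) * X ^ (i + j))"
      unfolding bser_def cb_def
      by (subst psum_mult_left(2)[OF lf_bser[OF X0]])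
         (rule psum_cong, simp add: const_mult power_add algebra_simps)
  qed
  also have "\<dots> = psum (UNIV \<times> UNIV) (\<lambda>(i, j). const (ca i * cb j) * X ^ (i + j))"
    by (rule psum_Sigma(1)[symmetric, OF L1])
  also have "\<dots> = psum (Sigma UNIV (\<lambda>n. {0..n})) (\<lambda>(n, i). const (ca i * cb (n - i)) * X ^ n)"
  proof -
    have "psum (UNIV \<times> UNIV) (\<lambda>(i, j). const (ca i * cb j) * X ^ (i + j))
        = psum (Sigma UNIV (\<lambda>n. {0..n})) (\<lambda>x. (\<lambda>(i, j). const (ca i * cb j) * X ^ (i + j)) (g x))"
      by (rule psum_reindex(1)[OF bij])
    also have "\<dots> = psum (Sigma UNIV (\<lambda>n. {0..n})) (\<lambda>(n, i). const (ca i * cb (n - i)) * X ^ n)"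
      by (rule psum_cong) (auto simp: g_def)
    finally show ?thesis .
  qed
  also have "\<dots> = psum UNIV (\<lambda>n. psum {0..n} (\<lambda>i. const (ca i * cb (n - i)) * X ^ n))"
    by (rule psum_Sigma(1)[OF L2])
  also have "\<dots> = psum UNIV (\<lambda>n. const (of_int (ib (a + b) n)) * X ^ n)"
  proof (rule psum_cong)
    fix n
    have "psum {0..n} (\<lambda>i. const (ca i * cb (n - i)) * X ^ n) = (\<Sum>i\<in>{0..n}. const (ca i * cb (n - i)) * X ^ n)"
      by (rule psum_finite) simp
    also have "\<dots> = const (\<Sum>i\<in>{0..n}. ca i * cb (n - i)) * X ^ n"
      by (simp add: const_sum sum_distrib_right)
    also have "(\<Sum>i\<in>{0..n}. ca i * cb (n - i)) = of_int (ib (a + b) n)"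
      by (simp add: ca_def cb_def ib_Vandermonde[symmetric])
    finally show "psum {0..n} (\<lambda>i. const (ca i * cb (n - i)) * X ^ n) = const (of_int (ib (a + b) n)) * X ^ n" .
  qed
  also have "\<dots> = bser X (a + b)" by (simp add: bser_def)
  finally show ?thesis .
qed


lemma bser_0:
  fixes X :: "('n::finite, 'a::comm_ring_1) mp"
  shows "bser X 0 = 1"
proof -
  have "bser X 0 = const (of_int (ib 0 0)) * X ^ 0"
    unfolding bser_def by (rule psum_single(1)) (auto simp: ib_zero)
  then show ?thesis by simp
qed

lemma bser_1:
  fixes X :: "('n::finite, 'a::comm_ring_1) mp"
  shows "bser X 1 = 1 + X"
proof -
  have "bser X 1 = psum {0, 1} (\<lambda>n. const (of_int (ib 1 n)) * X ^ n)"
    unfolding bser_def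
  proof (rule psum_zero_ext(1))
    fix i assume "i \<in> UNIV - {0, 1::nat}"
    then have "ib 1 i = 0" by (intro ib_zero) auto
    then show "const (of_int (ib 1 i)) * X ^ i = 0" by simp
  qed auto
  also have "\<dots> = 1 + X" by (subst psum_finite(1)) simp_all
  finally show ?thesis .
qed

lemma bser_nat:
  fixes X :: "('n::finite, 'a::comm_ring_1) mp"
  assumes X0: "cf X z0 = 0"
  shows "bser X (int m) = (1 + X) ^ m"
proof (induction m)
  case 0 then show ?case by (simp add: bser_0)
next
  case (Suc m)
  have "bser X (int (Suc m)) = bser X (int m + 1)" by (rule arg_cong[where f="bser X"]) simp
  also have "\<dots> = bser X (int m) * bser X 1" by (rule bser_add[symmetric, OF X0])
  finally have "bser X (int (Suc m)) = bser X (int m) * bser X 1" .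
  then show ?case using Suc by (simp add: bser_1 mult.commute)
qed

lemma bser_inv:
  fixes X :: "('n::finite, 'a::comm_ring_1) mp"
  assumes X0: "cf X z0 = 0"
  shows "(1 + X) * bser X (-1) = 1"
  using bser_add[OF X0, of 1 "-1"] by (simp add: bser_1 bser_0)

lemma bser_neg:
  fixes X :: "('n::finite, 'a::comm_ring_1) mp"
  assumes X0: "cf X z0 = 0"
  shows "bser X (- int m) = bser X (-1) ^ m"
proof (induction m)
  case 0 then show ?case by (simp add: bser_0)
next
  case (Suc m)
  have "bser X (- int (Suc m)) = bser X (- int m + (-1))" by (rule arg_cong[where f="bser X"]) simp
  also have "\<dots> = bser X (- int m) * bser X (-1)" by (rule bser_add[symmetric, OF X0])
  finally have "bser X (- int (Suc m)) = bser X (- int m) * bser X (-1)" .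
  then show ?case using Suc by (simp add: mult.commute)
qed

definition Pw :: "('n::finite, 'a::comm_ring_1) mp \<Rightarrow> int \<Rightarrow> ('n, 'a) mp" where
  "Pw L h = bser (L - 1) h"

lemma Pw_add:
  fixes L :: "('n::finite, 'a::comm_ring_1) mp"
  assumes "cf L z0 = 1"
  shows "Pw L a * Pw L b = Pw L (a + b)"
  unfolding Pw_def by (rule bser_add) (use assms in \<open>simp add: cf_one ps_one_def\<close>)

lemma Pw_0: "Pw L 0 = 1"
  by (simp add: Pw_def bser_0)

lemma Pw_mult:
  fixes L :: "('n::finite, 'a::comm_ring_1) mp"
  assumes "cf L z0 = 1"
  shows "Pw L a ^ m = Pw L (int m * a)"
proof (induction m)
  case 0 then show ?case by (simp add: Pw_0)
next
  case (Suc m)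
  then show ?case by (simp add: Pw_add[OF assms] algebra_simps)
qed

lemma ps_powi_Pw:
  fixes L :: "('n::finite, 'a::comm_ring_1) mp"
  assumes L0: "cf L z0 = 1"
  shows "ps_powi (cf L) h = cf (Pw L h)"
proof -
  define X where "X = L - 1"
  have X0: "cf X z0 = 0" using L0 by (simp add: X_def cf_one ps_one_def)
  have LX: "L = 1 + X" by (simp add: X_def)
  define Bi where "Bi = bser X (-1)"
  have inv: "ps_inv (cf L) = cf Bi"
    unfolding ps_inv_def
  proof (rule the_equality)
    show "ps_mult (cf L) (cf Bi) = ps_one"
    proof -
      have "L * Bi = 1" using bser_inv[OF X0] by (simp add: Bi_def LX)
      then have "cf (L * Bi) = cf 1" by simp
      then show ?thesis by (simp add: cf_times cf_one)
    qed
  next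
    fix g assume g: "ps_mult (cf L) g = ps_one"
    have "L * Abs_mp g = 1" unfolding times_mp_def one_mp_def by (simp add: g)
    have "L * Bi = 1" using bser_inv[OF X0] by (simp add: Bi_def LX)
    have "Abs_mp g = Abs_mp g * (L * Bi)" using \<open>L * Bi = 1\<close> by simp
    also have "\<dots> = (L * Abs_mp g) * Bi" by (simp only: mult_ac)
    also have "\<dots> = Bi" using \<open>L * Abs_mp g = 1\<close> by simp
    finally have "cf (Abs_mp g) = cf Bi" by simp
    then show "g = cf Bi" by simp
  qed
  show ?thesis
  proof (cases "0 \<le> h")
    case True
    then have "ps_powi (cf L) h = cf (L ^ nat h)" by (simp add: ps_powi_def ps_pow_cf Rep_mp_inverse)
    also have "L ^ nat h = bser X (int (nat h))" by (subst bser_nat[OF X0]) (simp add: LX)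
    also have "int (nat h) = h" using True by simp
    finally show ?thesis by (simp add: Pw_def X_def)
  next
    case False
    then have "ps_powi (cf L) h = cf (Bi ^ nat (- h))" by (simp add: ps_powi_def ps_pow_cf Rep_mp_inverse inv)
    also have "Bi ^ nat (- h) = bser X (- int (nat (- h)))" by (subst bser_neg[OF X0]) (simp add: Bi_def)
    also have "- int (nat (- h)) = h" using False by simp
    finally show ?thesis by (simp add: Pw_def X_def)
  qed
qed

definition U :: "nat \<Rightarrow> nat \<Rightarrow> (nat \<Rightarrow> nat) set" where
  "U r n = {u. (\<forall>s. (s < 1 \<or> r < s) \<longrightarrow> u s = 0) \<and> (\<Sum>s=1..r. u s) = n}"

definition mc :: "(nat \<Rightarrow> nat) \<Rightarrow> nat \<Rightarrow> nat" where
  "mc u r = (\<Prod>s=1..r. ((\<Sum>t=1..s. u t) choose u s))"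

lemma mc_Suc: "mc u (Suc r) = mc u r * ((\<Sum>t=1..Suc r. u t) choose u (Suc r))"
  by (simp add: mc_def)

lemma mc_fact: "(\<Prod>s=1..r. fact (u s)) * mc u r = (fact (\<Sum>s=1..r. u s) :: nat)"
proof (induction r)
  case 0 then show ?case by (simp add: mc_def)
next
  case (Suc r)
  let ?S = "\<Sum>s=1..r. u s"
  have "fact (u (Suc r)) * fact (?S + u (Suc r) - u (Suc r)) * ((?S + u (Suc r)) choose u (Suc r))
      = (fact (?S + u (Suc r)) :: nat)"
    by (rule binomial_fact_lemma) simp
  then have e: "fact (u (Suc r)) * fact ?S * ((?S + u (Suc r)) choose u (Suc r)) = (fact (?S + u (Suc r)) :: nat)"
    by simp
  have "(\<Prod>s=1..Suc r. fact (u s)) * mc u (Suc r)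
      = ((\<Prod>s=1..r. fact (u s)) * mc u r) * fact (u (Suc r)) * ((?S + u (Suc r)) choose u (Suc r))"
    by (simp add: mc_Suc)
  also have "\<dots> = fact (?S + u (Suc r))" using Suc.IH e by (simp add: mult_ac)
  finally show ?case by simp
qed

lemma multinom_mc: "multinom n0 u r = (if n0 = (\<Sum>s=1..r. u s) then int (mc u r) else 0)"
proof -
  have pos: "(\<Prod>s=1..r. fact (u s) :: nat) \<noteq> 0" by (simp add: prod_zero_iff)
  show ?thesis
  proof (cases "n0 = (\<Sum>s=1..r. u s)")
    case True
    then have "fact n0 = (\<Prod>s=1..r. fact (u s)) * mc u r" using mc_fact[of u r] by simp
    then show ?thesis using True pos by (simp add: multinom_def)
  qed (simp add: multinom_def)
qed

lemma finite_U: "finite (U r n)"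
proof (rule finite_subset)
  show "U r n \<subseteq> {f. \<forall>x. (x \<in> {1..r} \<longrightarrow> f x \<in> {0..n}) \<and> (x \<notin> {1..r} \<longrightarrow> f x = 0)}"
  proof
    fix u assume u: "u \<in> U r n"
    have "u x \<le> n" if "x \<in> {1..r}" for x
      using u that member_le_sum[of x "{1..r}" u] by (simp add: U_def)
    moreover have "u x = 0" if "x \<notin> {1..r}" for x
    proof -
      have H: "\<forall>s. (s < 1 \<or> r < s) \<longrightarrow> u s = 0" using u by (simp add: U_def)
      have "x < 1 \<or> r < x" using that by auto
      then show ?thesis by (rule H[rule_format])
    qed
    ultimately show "u \<in> {f. \<forall>x. (x \<in> {1..r} \<longrightarrow> f x \<in> {0..n}) \<and> (x \<notin> {1..r} \<longrightarrow> f x = 0)}"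
      by simp
  qed
  show "finite {f. \<forall>x. (x \<in> {1..r} \<longrightarrow> f x \<in> {0..n}) \<and> (x \<notin> {1..r} \<longrightarrow> f x = (0::nat))}"
    by (rule finite_set_of_finite_funs) auto
qed

lemma multinomial_thm:
  fixes a :: "nat \<Rightarrow> 'b::comm_semiring_1"
  shows "(\<Sum>s=1..r. a s) ^ n = (\<Sum>u\<in>U r n. of_nat (mc u r) * (\<Prod>s=1..r. a s ^ u s))"
proof (induction r arbitrary: n)
  case 0
  have "U 0 n = (if n = 0 then {\<lambda>_. 0} else {})" by (auto simp: U_def)
  then show ?case by (simp add: mc_def zero_power)
next
  case (Suc r)
  let ?A = "\<Sum>s=1..r. a s"
  have "(\<Sum>s=1..Suc r. a s) ^ n = (a (Suc r) + ?A) ^ n" by (simp add: add.commute)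
  also have "\<dots> = (\<Sum>k\<le>n. of_nat (n choose k) * a (Suc r) ^ k * ?A ^ (n - k))"
    by (rule binomial_ring)
  also have "\<dots> = (\<Sum>k\<le>n. of_nat (n choose k) * a (Suc r) ^ k * (\<Sum>u\<in>U r (n - k). of_nat (mc u r) * (\<Prod>s=1..r. a s ^ u s)))"
    by (simp only: Suc.IH)
  also have "\<dots> = (\<Sum>k\<le>n. \<Sum>u\<in>U r (n - k). of_nat (mc u r * (n choose k)) * ((\<Prod>s=1..r. a s ^ u s) * a (Suc r) ^ k))"
    by (rule sum.cong[OF refl]) (simp add: sum_distrib_left mult_ac)
  also have "\<dots> = (\<Sum>x\<in>Sigma {..n} (\<lambda>k. U r (n - k)). of_nat (mc (snd x) r * (n choose fst x)) * ((\<Prod>s=1..r. a s ^ snd x s) * a (Suc r) ^ fst x))"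
    by (subst sum.Sigma) (simp_all add: finite_U case_prod_beta)
  also have "\<dots> = (\<Sum>w\<in>U (Suc r) n. of_nat (mc w (Suc r)) * (\<Prod>s=1..Suc r. a s ^ w s))"
  proof (rule sum.reindex_bij_witness[where j="\<lambda>x. (snd x)(Suc r := fst x)" and i="\<lambda>w. (w (Suc r), w(Suc r := 0))"])
    fix x assume x: "x \<in> Sigma {..n} (\<lambda>k. U r (n - k))"
    define k where "k = fst x"
    define u where "u = snd x"
    have xku: "x = (k, u)" by (simp add: k_def u_def)
    have k: "k \<le> n" and u: "u \<in> U r (n - k)" using x by (auto simp: k_def u_def)
    have H: "\<forall>s. (s < 1 \<or> r < s) \<longrightarrow> u s = 0" using u by (simp add: U_def)
    have u0: "u (Suc r) = 0" using H by simp
    have Su: "(\<Sum>s=1..r. u s) = n - k" using u by (simp add: U_def)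
    have same: "(\<Sum>s=1..r. (u(Suc r := k)) s) = (\<Sum>s=1..r. u s)" by (rule sum.cong) auto
    have samep: "(\<Prod>s=1..r. a s ^ (u(Suc r := k)) s) = (\<Prod>s=1..r. a s ^ u s)" by (rule prod.cong) auto
    have samem: "mc (u(Suc r := k)) r = mc u r" unfolding mc_def
    proof (rule prod.cong[OF refl])
      fix s assume "s \<in> {1..r}"
      then have "(\<Sum>t=1..s. (u(Suc r := k)) t) = (\<Sum>t=1..s. u t)" by (intro sum.cong) auto
      then show "(\<Sum>t=1..s. (u(Suc r := k)) t) choose (u(Suc r := k)) s = (\<Sum>t=1..s. u t) choose u s"
        using \<open>s \<in> {1..r}\<close> by simp
    qed
    have uu: "u(Suc r := 0) = u" using u0 by auto
    show "(\<lambda>w. (w (Suc r), w(Suc r := 0))) ((\<lambda>x. (snd x)(Suc r := fst x)) x) = x"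
      using uu by (simp add: xku)
    have tot: "(\<Sum>s=1..Suc r. (u(Suc r := k)) s) = n" using same Su k by simp
    have supp: "\<forall>s. (s < 1 \<or> Suc r < s) \<longrightarrow> (u(Suc r := k)) s = 0" using H by auto
    show "(\<lambda>x. (snd x)(Suc r := fst x)) x \<in> U (Suc r) n"
      using tot supp by (simp add: xku U_def)
    have "mc (u(Suc r := k)) (Suc r) = mc u r * (n choose k)"
      using tot samem by (simp add: mc_Suc)
    moreover have "(\<Prod>s=1..Suc r. a s ^ (u(Suc r := k)) s) = (\<Prod>s=1..r. a s ^ u s) * a (Suc r) ^ k"
      using samep by simp
    ultimately show "of_nat (mc ((\<lambda>x. (snd x)(Suc r := fst x)) x) (Suc r)) * (\<Prod>s=1..Suc r. a s ^ ((\<lambda>x. (snd x)(Suc r := fst x)) x) s)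
        = of_nat (mc (snd x) r * (n choose fst x)) * ((\<Prod>s=1..r. a s ^ snd x s) * a (Suc r) ^ fst x)"
      by (simp add: xku)
  next
    fix w assume w: "w \<in> U (Suc r) n"
    have H: "\<forall>s. (s < 1 \<or> Suc r < s) \<longrightarrow> w s = 0" using w by (simp add: U_def)
    have Sw: "(\<Sum>s=1..r. w s) + w (Suc r) = n" using w by (simp add: U_def)
    have same: "(\<Sum>s=1..r. (w(Suc r := 0)) s) = (\<Sum>s=1..r. w s)" by (rule sum.cong) auto
    show "(\<lambda>x. (snd x)(Suc r := fst x)) ((\<lambda>w. (w (Suc r), w(Suc r := 0))) w) = w" by simp
    have supp: "\<forall>s. (s < 1 \<or> r < s) \<longrightarrow> (w(Suc r := 0)) s = 0" using H by auto
    have "w (Suc r) \<le> n" using Sw by simp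
    moreover have "w(Suc r := 0) \<in> U r (n - w (Suc r))" using supp same Sw by (simp add: U_def)
    ultimately show "(\<lambda>w. (w (Suc r), w(Suc r := 0))) w \<in> Sigma {..n} (\<lambda>k. U r (n - k))" by simp
  qed
  finally show ?case .
qed

definition V :: "nat \<Rightarrow> (nat \<Rightarrow> nat) set" where
  "V r = {v. \<forall>s. r < s \<longrightarrow> v s = 0}"

definition NN :: "(nat \<Rightarrow> nat) \<Rightarrow> nat \<Rightarrow> nat" where
  "NN v r = (\<Sum>s=1..r. s * v s)"

lemma gbin_ib: "gbin h n0 ns rr = ib h n0 * multinom n0 ns rr"
  by (simp add: gbin_def ib_def)

lemma sum_le_NN: "(\<Sum>s=1..r. v s) \<le> NN v r"
  unfolding NN_def by (rule sum_mono) simp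

lemma prod_term:
  fixes W :: "('n::finite, 'a::comm_ring_1) mp"
  shows "(\<Prod>s=1..r. (const (zz s) * W ^ s) ^ u s) = const (\<Prod>s=1..r. zz s ^ u s) * W ^ NN u r"
  by (simp add: power_mult_distrib prod.distrib const_prod const_power NN_def power_sum power_mult[symmetric] mult.commute)

lemma expand_L:
  fixes W :: "('n::finite, 'a::comm_ring_1) mp" and zz :: "nat \<Rightarrow> 'a"
  assumes W0: "cf W z0 = 0" and z0: "zz 0 = 1"
    and L: "L = (\<Sum>s\<in>{0..r}. const (zz s) * W ^ s)"
  shows "Pw L h = psum (V r) (\<lambda>v. const (of_int (gbin h (v 0) v r) * (\<Prod>s=1..r. zz s ^ v s)) * W ^ NN v r)"
    "lf (V r) (\<lambda>v. const (of_int (gbin h (v 0) v r) * (\<Prod>s=1..r. zz s ^ v s)) * W ^ NN v r)"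
proof -
  define X where "X = (\<Sum>s\<in>{1..r}. const (zz s) * W ^ s)"
  have "{0..r} = insert 0 {1..r}" by auto
  then have LX: "L - 1 = X" by (simp add: L X_def z0)
  have X0: "cf X z0 = 0"
  proof -
    have "cf (const (zz s) * W ^ s) z0 = 0" if "s \<in> {1..r}" for s
      using that W0 by (simp add: cf_power_0 zero_power)
    then show ?thesis by (simp add: X_def cf_sum)
  qed
  define cG where "cG n u = of_int (ib h n) * of_nat (mc u r) * (\<Prod>s=1..r. zz s ^ u s)" for n u
  define G where "G x = const (cG (fst x) (snd x)) * W ^ NN (snd x) r" for x
  define Fv where "Fv v = const (of_int (gbin h (v 0) v r) * (\<Prod>s=1..r. zz s ^ v s)) * W ^ NN v r" for v
  define S where "S = Sigma UNIV (U r)"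
  have step1: "const (of_int (ib h n)) * X ^ n = psum (U r n) (\<lambda>u. G (n, u))" for n
  proof -
    have "X ^ n = (\<Sum>u\<in>U r n. of_nat (mc u r) * (\<Prod>s=1..r. (const (zz s) * W ^ s) ^ u s))"
      unfolding X_def by (rule multinomial_thm)
    also have "\<dots> = (\<Sum>u\<in>U r n. const (of_nat (mc u r) * (\<Prod>s=1..r. zz s ^ u s)) * W ^ NN u r)"
      by (rule sum.cong[OF refl]) (simp only: prod_term const_mult const_of_nat mult.assoc)
    finally have "const (of_int (ib h n)) * X ^ n = (\<Sum>u\<in>U r n. G (n, u))"
      by (simp add: sum_distrib_left G_def cG_def const_mult mult.assoc)
    also have "\<dots> = psum (U r n) (\<lambda>u. G (n, u))" by (rule psum_finite(1)[symmetric]) (simp add: finite_U)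
    finally show ?thesis .
  qed
  have lfS: "lf S G"
    unfolding G_def
  proof (rule lf_powers[OF W0])
    fix m :: "'n \<Rightarrow> nat"
    have "{x \<in> S. NN (snd x) r \<le> deg m} \<subseteq> Sigma {..deg m} (U r)"
    proof
      fix x assume x: "x \<in> {x \<in> S. NN (snd x) r \<le> deg m}"
      then have "fst x = (\<Sum>s=1..r. snd x s)" by (auto simp: S_def U_def)
      then have "fst x \<le> deg m" using x sum_le_NN[of "snd x" r] by simp
      then show "x \<in> Sigma {..deg m} (U r)" using x by (auto simp: S_def)
    qed
    then show "finite {x \<in> S. NN (snd x) r \<le> deg m}"
      by (rule finite_subset) (simp add: finite_U)
  qed
  have Pw_S: "Pw L h = psum S G"
  proof -
    have "Pw L h = psum UNIV (\<lambda>n. psum (U r n) (\<lambda>u. G (n, u)))"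
      unfolding Pw_def LX bser_def using step1 by simp
    also have "\<dots> = psum S (\<lambda>(n, u). G (n, u))"
      unfolding S_def by (rule psum_Sigma(1)[symmetric]) (use lfS in \<open>simp add: S_def\<close>)
    finally show ?thesis by simp
  qed
  define phi where "phi x = (snd x)(0 := fst x)" for x :: "nat \<times> (nat \<Rightarrow> nat)"
  define I where "I = {v \<in> V r. v 0 = (\<Sum>s=1..r. v s)}"
  have bij: "bij_betw phi S I"
  proof (rule bij_betw_byWitness[where f'="\<lambda>v. (v 0, v(0 := 0))"])
    show "\<forall>x\<in>S. (\<lambda>v. (v 0, v(0 := 0))) (phi x) = x"
    proof
      fix x assume "x \<in> S"
      then have "snd x 0 = 0" by (auto simp: S_def U_def)
      then show "(\<lambda>v. (v 0, v(0 := 0))) (phi x) = x"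
        by (cases x) (auto simp: phi_def)
    qed
    show "\<forall>v\<in>I. phi (v 0, v(0 := 0)) = v" by (auto simp: phi_def)
    show "phi ` S \<subseteq> I"
    proof
      fix v assume "v \<in> phi ` S"
      then obtain x where x: "x \<in> S" "v = phi x" by blast
      have H: "\<forall>s. (s < 1 \<or> r < s) \<longrightarrow> snd x s = 0" and Sx: "(\<Sum>s=1..r. snd x s) = fst x"
        using x(1) by (auto simp: S_def U_def)
      have same: "(\<Sum>s=1..r. v s) = (\<Sum>s=1..r. snd x s)"
        unfolding x(2) phi_def by (rule sum.cong) auto
      show "v \<in> I" unfolding I_def V_def using H Sx same by (auto simp: x(2) phi_def)
    qed
    show "(\<lambda>v. (v 0, v(0 := 0))) ` I \<subseteq> S"
    proof
      fix x assume "x \<in> (\<lambda>v. (v 0, v(0 := 0))) ` I"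
      then obtain v where v: "v \<in> I" "x = (v 0, v(0 := 0))" by blast
      have same: "(\<Sum>s=1..r. (v(0 := 0)) s) = (\<Sum>s=1..r. v s)" by (rule sum.cong) auto
      show "x \<in> S" using v same by (auto simp: S_def U_def I_def V_def)
    qed
  qed
  have FG: "Fv (phi x) = G x" if "x \<in> S" for x
  proof -
    obtain n u where x: "x = (n, u)" by (cases x)
    have u: "u \<in> U r n" using that by (simp add: S_def x)
    have Su: "(\<Sum>s=1..r. u s) = n" using u by (simp add: U_def)
    have s1: "(\<Sum>s=1..r. (u(0 := n)) s) = (\<Sum>s=1..r. u s)" by (rule sum.cong) auto
    have s2: "mc (u(0 := n)) r = mc u r" unfolding mc_def
    proof (rule prod.cong[OF refl])
      fix s assume "s \<in> {1..r}"
      then have "(\<Sum>t=1..s. (u(0 := n)) t) = (\<Sum>t=1..s. u t)" by (intro sum.cong) auto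
      then show "(\<Sum>t=1..s. (u(0 := n)) t) choose (u(0 := n)) s = (\<Sum>t=1..s. u t) choose u s"
        using \<open>s \<in> {1..r}\<close> by simp
    qed
    have s3: "(\<Prod>s=1..r. zz s ^ (u(0 := n)) s) = (\<Prod>s=1..r. zz s ^ u s)" by (rule prod.cong) auto
    have s4: "NN (u(0 := n)) r = NN u r" unfolding NN_def by (rule sum.cong) auto
    have "gbin h n (u(0 := n)) r = ib h n * int (mc u r)"
      using s1 s2 Su by (simp add: gbin_ib multinom_mc)
    then show ?thesis using s3 s4
      by (simp add: Fv_def G_def cG_def phi_def x)
  qed
  have Fv0: "Fv v = 0" if "v \<in> V r - I" for v
  proof -
    have "v 0 \<noteq> (\<Sum>s=1..r. v s)" using that by (auto simp: I_def)
    then have "gbin h (v 0) v r = 0" by (simp add: gbin_ib multinom_mc)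
    then show ?thesis by (simp add: Fv_def)
  qed
  have IV: "I \<subseteq> V r" by (auto simp: I_def)
  have eqF: "(\<lambda>v. const (of_int (gbin h (v 0) v r) * (\<Prod>s=1..r. zz s ^ v s)) * W ^ NN v r) = Fv"
    by (simp add: Fv_def fun_eq_iff)
  have "psum (V r) Fv = psum I Fv" by (rule psum_zero_ext(1)[OF IV Fv0])
  also have "\<dots> = psum S (\<lambda>x. Fv (phi x))" by (rule psum_reindex(1)[OF bij])
  also have "\<dots> = psum S G" by (rule psum_cong) (rule FG)
  finally show "Pw L h = psum (V r) (\<lambda>v. const (of_int (gbin h (v 0) v r) * (\<Prod>s=1..r. zz s ^ v s)) * W ^ NN v r)"
    unfolding eqF using Pw_S by simp
  have "lf (V r) Fv = lf I Fv" by (rule psum_zero_ext(2)[OF IV Fv0])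
  also have "\<dots> = lf S (\<lambda>x. Fv (phi x))" by (rule psum_reindex(2)[OF bij])
  also have "\<dots> = lf S G" by (rule lf_cong) (rule FG)
  finally show "lf (V r) (\<lambda>v. const (of_int (gbin h (v 0) v r) * (\<Prod>s=1..r. zz s ^ v s)) * W ^ NN v r)"
    unfolding eqF using lfS by simp
qed

lemma pow_unit:
  fixes x xi :: "'a::comm_ring_1"
  assumes "x * xi = 1"
  shows "x ^ a * xi ^ b = (if b \<le> a then x ^ (a - b) else xi ^ (b - a))"
proof (cases "b \<le> a")
  case True
  have "x ^ a = x ^ (a - b) * x ^ b" using True by (simp add: power_add[symmetric])
  then have "x ^ a * xi ^ b = x ^ (a - b) * (x * xi) ^ b"
    by (simp add: power_mult_distrib mult.assoc)
  then show ?thesis using True assms by simp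
next
  case False
  have "xi ^ b = xi ^ (b - a) * xi ^ a" using False by (simp add: power_add[symmetric])
  then have "x ^ a * xi ^ b = xi ^ (b - a) * (x * xi) ^ a"
    by (simp add: power_mult_distrib mult_ac)
  then show ?thesis using False assms by simp
qed

lemma xpow_add:
  assumes "x j * xi j = 1"
  shows "xpow x xi j e * xpow x xi j f = xpow x xi j (e + f)"
proof -
  have u: "x j * xi j = 1" "xi j * x j = 1" using assms by (simp_all add: mult.commute)
  show ?thesis
  proof (cases "0 \<le> e")
    case e: True
    show ?thesis
    proof (cases "0 \<le> f")
      case True
      then show ?thesis using e by (simp add: xpow_def power_add[symmetric] nat_add_distrib)
    next
      case False
      then show ?thesis using e pow_unit[OF u(1), of "nat e" "nat (- f)"]
        by (auto simp: xpow_def nat_diff_distrib' intro!: arg_cong2[where f="(^)"])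
    qed
  next
    case e: False
    show ?thesis
    proof (cases "0 \<le> f")
      case True
      then show ?thesis using e pow_unit[OF u(1), of "nat f" "nat (- e)"]
        by (auto simp: xpow_def mult.commute nat_diff_distrib' intro!: arg_cong2[where f="(^)"])
    next
      case False
      then have "nat (- e) + nat (- f) = nat (- (e + f))" using e by simp
      then show ?thesis using e False by (simp add: xpow_def power_add[symmetric])
    qed
  qed
qed

lemma xmon_add:
  assumes "\<forall>j. x j * xi j = 1"
  shows "xmon x xi e * xmon x xi f = xmon x xi (\<lambda>j. e j + f j)"
  unfolding xmon_def prod.distrib[symmetric] using assms by (simp add: xpow_add)

lemma xmon_zero: "xmon x xi (\<lambda>_. 0) = 1"
  by (simp add: xmon_def xpow_def)

definition Y :: "('n::finite \<Rightarrow> 'n \<Rightarrow> int) \<Rightarrow> ('n \<Rightarrow> 'a::comm_ring_1) \<Rightarrow> ('n \<Rightarrow> 'a) \<Rightarrow> ('n \<Rightarrow> nat) \<Rightarrow> ('n, 'a) mp" where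
  "Y B x xi a = Abs_mp (yhat B x xi a)"

lemma Y_mult:
  assumes "\<forall>j. x j * xi j = 1"
  shows "Y B x xi a * Y B x xi b = Y B x xi (\<lambda>m. a m + b m)"
proof (rule mp_eqI)
  fix m
  have "cf (Y B x xi a * Y B x xi b) m
      = (\<Sum>p\<in>Dn m. if p = a then (if (\<lambda>v. m v - p v) = b then xmon x xi (\<lambda>j. \<Sum>i\<in>UNIV. B j i * int (a i)) * xmon x xi (\<lambda>j. \<Sum>i\<in>UNIV. B j i * int (b i)) else 0) else 0)"
    unfolding cf_times ps_mult_Dn Y_def by (rule sum.cong) (auto simp: yhat_def)
  also have "\<dots> = (if a \<in> Dn m then (if (\<lambda>v. m v - a v) = b then xmon x xi (\<lambda>j. \<Sum>i\<in>UNIV. B j i * int (a i)) * xmon x xi (\<lambda>j. \<Sum>i\<in>UNIV. B j i * int (b i)) else 0) else 0)"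
    by (rule sum.delta[OF finite_Dn])
  also have "\<dots> = (if m = (\<lambda>v. a v + b v) then xmon x xi (\<lambda>j. \<Sum>i\<in>UNIV. B j i * int (a i + b i)) else 0)"
  proof -
    have iff: "(a \<in> Dn m \<and> (\<lambda>v. m v - a v) = b) \<longleftrightarrow> m = (\<lambda>v. a v + b v)"
    proof
      assume "a \<in> Dn m \<and> (\<lambda>v. m v - a v) = b"
      then have "\<forall>v. a v \<le> m v" "\<forall>v. m v - a v = b v" by (auto simp: Dn_def)
      then show "m = (\<lambda>v. a v + b v)" by (intro ext) (metis le_add_diff_inverse)
    next
      assume "m = (\<lambda>v. a v + b v)"
      then show "a \<in> Dn m \<and> (\<lambda>v. m v - a v) = b" by (auto simp: Dn_def)
    qed
    have xm: "xmon x xi (\<lambda>j. \<Sum>i\<in>UNIV. B j i * int (a i)) * xmon x xi (\<lambda>j. \<Sum>i\<in>UNIV. B j i * int (b i))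
        = xmon x xi (\<lambda>j. \<Sum>i\<in>UNIV. B j i * int (a i + b i))"
      by (simp add: xmon_add[OF assms] sum.distrib[symmetric] distrib_left)
    show ?thesis using iff xm by auto
  qed
  also have "\<dots> = cf (Y B x xi (\<lambda>m. a m + b m)) m" by (simp add: Y_def yhat_def)
  finally show "cf (Y B x xi a * Y B x xi b) m = cf (Y B x xi (\<lambda>m. a m + b m)) m" .
qed

lemma Y_zero: "Y B x xi (\<lambda>_. 0) = 1"
  by (rule mp_eqI) (simp add: Y_def yhat_def cf_one ps_one_def xmon_zero)

lemma Y_power:
  assumes "\<forall>j. x j * xi j = 1"
  shows "Y B x xi a ^ N = Y B x xi (\<lambda>m. N * a m)"
proof (induction N)
  case 0 then show ?case by (simp add: Y_zero)
next
  case (Suc N)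
  then show ?case by (simp add: Y_mult[OF assms] add.commute)
qed

lemma Y_cf0: "a \<noteq> z0 \<Longrightarrow> cf (Y B x xi a) z0 = 0"
  by (auto simp: Y_def yhat_def)

lemma Y_sum:
  assumes "\<forall>j. x j * xi j = 1"
  shows "Y B x xi (\<lambda>m. \<Sum>j\<in>A. f j m) = (\<Prod>j\<in>A. Y B x xi (f j))"
proof (induction A rule: infinite_finite_induct)
  case (infinite A) then show ?case by (simp add: Y_zero)
next
  case empty then show ?case by (simp add: Y_zero)
next
  case (insert j A)
  then show ?case by (simp add: Y_mult[OF assms, symmetric])
qed

lemma cf_const: "cf (const c :: ('n::finite, 'a::comm_ring_1) mp) m = (if m = z0 then c else 0)"
  by (simp add: const_def)

lemma ps_prod_upto_cong:
  "(\<And>j. 1 \<le> j \<Longrightarrow> j \<le> k \<Longrightarrow> F j = G j) \<Longrightarrow> ps_prod_upto F k = ps_prod_upto G k"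
  by (induction k) auto

lemma sc_av:
  assumes "sign_coherent (cvec r B ii j)"
  shows "(\<lambda>m. nat (cplus r B ii j m)) \<noteq> z0" "\<And>m. 0 \<le> cplus r B ii j m"
proof -
  let ?c = "cvec r B ii j"
  have nz: "?c \<noteq> (\<lambda>_. 0)" and sc: "(\<forall>m. 0 \<le> ?c m) \<or> (\<forall>m. ?c m \<le> 0)"
    using assms by (auto simp: sign_coherent_def)
  obtain q where q: "?c q \<noteq> 0" using nz by auto
  show "\<And>m. 0 \<le> cplus r B ii j m"
    using sc by (auto simp: cplus_def sgn_vec_def mult_nonneg_nonneg mult_nonpos_nonpos)
  have "0 < cplus r B ii j q"
  proof (cases "\<forall>m. 0 \<le> ?c m")
    case True
    then show ?thesis using q by (auto simp: cplus_def sgn_vec_def intro: le_neq_trans)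
  next
    case False
    then have "\<forall>m. ?c m \<le> 0" using sc by auto
    then have "?c q < 0" using q by (meson le_less)
    then show ?thesis using False by (simp add: cplus_def sgn_vec_def)
  qed
  then show "(\<lambda>m. nat (cplus r B ii j m)) \<noteq> z0" by (metis less_irrefl zero_less_nat_eq)
qed

lemma Lfam_stable: "j \<le> l \<Longrightarrow> Lfam D0 r B ii x xi z l j = Lser D0 r B ii x xi z j"
proof (induction l)
  case 0 then show ?case by (simp add: Lser_def)
next
  case (Suc l)
  show ?case
  proof (cases "j = Suc l")
    case True then show ?thesis by (simp add: Lser_def)
  next
    case False
    then have "j \<le> l" using Suc.prems by simp
    then show ?thesis using Suc.IH False by (simp add: Let_def)
  qed
qed

locale L4 =
  fixes D0 :: "'n::finite \<Rightarrow> int" and r :: "'n \<Rightarrow> nat" and B :: "'n \<Rightarrow> 'n \<Rightarrow> int"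
    and ii :: "nat \<Rightarrow> 'n" and x xi :: "'n \<Rightarrow> 'a::comm_ring_1" and z :: "'n \<Rightarrow> nat \<Rightarrow> 'a"
  assumes xu: "\<forall>j. x j * xi j = 1" and zend: "\<forall>i. z i 0 = 1"
begin

definition Lm where "Lm j = Abs_mp (Lser D0 r B ii x xi z j)"
definition av where "av j = (\<lambda>m. nat (cplus r B ii j m))"
definition E where "E l j = Eint D0 r B ii l j"
definition YY where "YY a = Y B x xi a"
definition WW where "WW K = YY (av K) * (\<Prod>j\<in>{1..K - 1}. Pw (Lm j) (- E K j))"
definition SC where "SC k \<longleftrightarrow> (\<forall>j. 1 \<le> j \<and> j \<le> k \<longrightarrow> sign_coherent (cvec r B ii j))"

lemma Lser_Suc:
  "Lser D0 r B ii x xi z (Suc k) =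
     (\<lambda>mm. \<Sum>s\<in>{0..r (ii (Suc k))}. z (ii (Suc k)) s *
        ps_pow (ps_mult (yhat B x xi (av (Suc k)))
                (ps_prod_upto (\<lambda>j. ps_powi (Lser D0 r B ii x xi z j) (- E (Suc k) j)) k)) s mm)"
proof -
  have "ps_prod_upto (\<lambda>j. ps_powi (Lfam D0 r B ii x xi z k j) (- Eint D0 r B ii (Suc k) j)) k
      = ps_prod_upto (\<lambda>j. ps_powi (Lser D0 r B ii x xi z j) (- E (Suc k) j)) k"
    by (rule ps_prod_upto_cong) (simp add: Lfam_stable E_def)
  then show ?thesis by (simp add: Lser_def Let_def av_def)
qed

lemma Lm_Suc:
  assumes IH: "\<And>i. 1 \<le> i \<Longrightarrow> i \<le> k \<Longrightarrow> cf (Lm i) z0 = 1"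
  shows "Lm (Suc k) = (\<Sum>s\<in>{0..r (ii (Suc k))}. const (z (ii (Suc k)) s) * WW (Suc k) ^ s)"
proof -
  have P: "ps_prod_upto (\<lambda>j. ps_powi (Lser D0 r B ii x xi z j) (- E (Suc k) j)) k
      = cf (\<Prod>j\<in>{1..k}. Pw (Lm j) (- E (Suc k) j))"
  proof -
    have "ps_prod_upto (\<lambda>j. ps_powi (Lser D0 r B ii x xi z j) (- E (Suc k) j)) k
        = cf (\<Prod>j\<in>{1..k}. Abs_mp (ps_powi (Lser D0 r B ii x xi z j) (- E (Suc k) j)))"
      by (rule ps_prod_upto_cf)
    also have "(\<Prod>j\<in>{1..k}. Abs_mp (ps_powi (Lser D0 r B ii x xi z j) (- E (Suc k) j)))
        = (\<Prod>j\<in>{1..k}. Pw (Lm j) (- E (Suc k) j))"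
    proof (rule prod.cong[OF refl])
      fix j assume "j \<in> {1..k}"
      then have "cf (Lm j) z0 = 1" using IH by auto
      then have "ps_powi (cf (Lm j)) (- E (Suc k) j) = cf (Pw (Lm j) (- E (Suc k) j))"
        by (rule ps_powi_Pw)
      then show "Abs_mp (ps_powi (Lser D0 r B ii x xi z j) (- E (Suc k) j)) = Pw (Lm j) (- E (Suc k) j)"
        by (simp add: Lm_def Rep_mp_inverse)
    qed
    finally show ?thesis .
  qed
  have w: "ps_mult (yhat B x xi (av (Suc k))) (ps_prod_upto (\<lambda>j. ps_powi (Lser D0 r B ii x xi z j) (- E (Suc k) j)) k)
      = cf (WW (Suc k))"
    unfolding P WW_def by (simp add: cf_times YY_def Y_def)
  show ?thesis
  proof (rule mp_eqI)
    fix m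
    show "cf (Lm (Suc k)) m = cf (\<Sum>s\<in>{0..r (ii (Suc k))}. const (z (ii (Suc k)) s) * WW (Suc k) ^ s) m"
      unfolding Lm_def Abs_mp_inv Lser_Suc w cf_sum
      by (simp add: ps_pow_cf Rep_mp_inverse)
  qed
qed

lemma WW_0:
  assumes "sign_coherent (cvec r B ii K)"
  shows "cf (WW K) z0 = 0"
  using sc_av(1)[OF assms] by (simp add: WW_def cf_times_0 YY_def Y_cf0 av_def)

lemma Lm_0:
  assumes "SC k" "1 \<le> i" "i \<le> k"
  shows "cf (Lm i) z0 = 1"
  using assms
proof (induction k arbitrary: i)
  case 0 then show ?case by simp
next
  case (Suc k)
  have IH: "\<And>i. 1 \<le> i \<Longrightarrow> i \<le> k \<Longrightarrow> cf (Lm i) z0 = 1"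
    using Suc.IH Suc.prems(1) by (auto simp: SC_def)
  show ?case
  proof (cases "i = Suc k")
    case False
    then show ?thesis using IH Suc.prems by simp
  next
    case True
    have W0: "cf (WW (Suc k)) z0 = 0" by (rule WW_0) (use Suc.prems(1) in \<open>auto simp: SC_def\<close>)
    have "{0..r (ii (Suc k))} = insert 0 {1..r (ii (Suc k))}" by auto
    then have "cf (Lm (Suc k)) z0 = z (ii (Suc k)) 0 + (\<Sum>s\<in>{1..r (ii (Suc k))}. z (ii (Suc k)) s * cf (WW (Suc k)) z0 ^ s)"
      by (simp add: Lm_Suc[OF IH] cf_sum cf_power_0 cf_const)
    also have "\<dots> = 1" using W0 zend by (simp add: zero_power)
    finally show ?thesis using True by simp
  qed
qed

end

context L4
begin

definition coefk where
  "coefk k h nn = (\<Prod>j=1..k. of_int (gbin (h j + (\<Sum>l=j+1..k. \<Sum>s=1..r (ii l). int s * int (nn l s) * (- E l j)))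
                     (nn j 0) (nn j) (r (ii j))) * (\<Prod>s=1..r (ii j). z (ii j) s ^ nn j s))"
definition expk where
  "expk k nn = (\<lambda>m. \<Sum>j=1..k. NN (nn j) (r (ii j)) * av j m)"
definition RT where
  "RT k h nn = Abs_mp (rhs_term D0 r B ii x xi z k h nn)"

lemma RT_eq: "RT k h nn = const (coefk k h nn) * YY (expk k nn)"
proof (rule mp_eqI)
  fix m
  show "cf (RT k h nn) m = cf (const (coefk k h nn) * YY (expk k nn)) m"
    by (simp add: RT_def rhs_term_def coefk_def expk_def E_def NN_def av_def YY_def Y_def)
qed

lemma finite_bounded_funs:
  assumes "finite A"
  shows "finite {nn :: nat \<Rightarrow> nat \<Rightarrow> nat. \<forall>j s. ((j, s) \<notin> A \<longrightarrow> nn j s = 0) \<and> nn j s \<le> M}"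
proof -
  let ?F = "{f :: nat \<times> nat \<Rightarrow> nat. \<forall>p. (p \<in> A \<longrightarrow> f p \<in> {0..M}) \<and> (p \<notin> A \<longrightarrow> f p = 0)}"
  have "finite ?F" by (rule finite_set_of_finite_funs) (use assms in auto)
  moreover have "{nn :: nat \<Rightarrow> nat \<Rightarrow> nat. \<forall>j s. ((j, s) \<notin> A \<longrightarrow> nn j s = 0) \<and> nn j s \<le> M}
      \<subseteq> (\<lambda>f j s. f (j, s)) ` ?F"
  proof
    fix nn :: "nat \<Rightarrow> nat \<Rightarrow> nat"
    assume nn: "nn \<in> {nn. \<forall>j s. ((j, s) \<notin> A \<longrightarrow> nn j s = 0) \<and> nn j s \<le> M}"
    have "case_prod nn \<in> ?F" using nn by auto
    moreover have "nn = (\<lambda>j s. case_prod nn (j, s))" by simp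
    ultimately show "nn \<in> (\<lambda>f j s. f (j, s)) ` ?F" by blast
  qed
  ultimately show ?thesis by (rule finite_surj)
qed

lemma FIN:
  assumes "SC k"
  shows "lf (tuples r ii k) (RT k h)"
  unfolding lf_def
proof
  fix m :: "'n \<Rightarrow> nat"
  define A where "A = Sigma {1..k} (\<lambda>j. {0..r (ii j)})"
  have "{nn \<in> tuples r ii k. cf (RT k h nn) m \<noteq> 0}
      \<subseteq> {nn. \<forall>j s. ((j, s) \<notin> A \<longrightarrow> nn j s = 0) \<and> nn j s \<le> deg m}"
  proof
    fix nn assume "nn \<in> {nn \<in> tuples r ii k. cf (RT k h nn) m \<noteq> 0}"
    then have T: "nn \<in> tuples r ii k" and nz: "cf (RT k h nn) m \<noteq> 0" by auto
    have nz': "coefk k h nn * cf (YY (expk k nn)) m \<noteq> 0" using nz by (simp add: RT_eq)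
    then have cnz: "coefk k h nn \<noteq> 0" and ynz: "cf (YY (expk k nn)) m \<noteq> 0" by auto
    from ynz have mexp: "m = expk k nn" by (simp add: YY_def Y_def yhat_def split: if_splits)
    from T have TH: "\<forall>j s. (j < 1 \<or> k < j \<or> r (ii j) < s) \<longrightarrow> nn j s = 0"
      unfolding tuples_def by (rule CollectD)
    have tz: "nn j s = 0" if "j < 1 \<or> k < j \<or> r (ii j) < s" for j s
      using TH[rule_format, OF that] .
    have bound: "nn j s \<le> deg m" for j s
    proof (cases "1 \<le> j \<and> j \<le> k \<and> s \<le> r (ii j)")
      case False
      then have "nn j s = 0" by (intro tz) auto
      then show ?thesis by simp
    next
      case True
      then have j: "j \<in> {1..k}" and s: "s \<le> r (ii j)" by auto
      define fj where "fj j' = (of_int (gbin (h j' + (\<Sum>l=j'+1..k. \<Sum>s=1..r (ii l). int s * int (nn l s) * (- E l j')))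
                     (nn j' 0) (nn j') (r (ii j'))) * (\<Prod>s=1..r (ii j'). z (ii j') s ^ nn j' s) :: 'a)" for j'
      have cp: "coefk k h nn = prod fj {1..k}" by (simp add: coefk_def fj_def)
      have "fj j \<noteq> 0"
      proof
        assume "fj j = 0"
        then have "prod fj {1..k} = 0" using j by (intro prod_zero) auto
        then show False using cnz cp by simp
      qed
      then have "of_int (gbin (h j + (\<Sum>l=j+1..k. \<Sum>s=1..r (ii l). int s * int (nn l s) * (- E l j)))
                     (nn j 0) (nn j) (r (ii j))) * (\<Prod>s=1..r (ii j). z (ii j) s ^ nn j s) \<noteq> (0::'a)"
        by (simp add: fj_def)
      then have "gbin (h j + (\<Sum>l=j+1..k. \<Sum>s=1..r (ii l). int s * int (nn l s) * (- E l j)))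
                     (nn j 0) (nn j) (r (ii j)) \<noteq> 0" by auto
      then have n0: "nn j 0 = (\<Sum>s=1..r (ii j). nn j s)"
        by (auto simp: gbin_ib multinom_mc split: if_splits)
      have sc: "sign_coherent (cvec r B ii j)" using assms j by (auto simp: SC_def)
      obtain q where q: "av j q \<noteq> 0" using sc_av(1)[OF sc] by (auto simp: av_def fun_eq_iff)
      have "NN (nn j) (r (ii j)) \<le> NN (nn j) (r (ii j)) * av j q" using q by simp
      also have "\<dots> \<le> expk k nn q"
        unfolding expk_def using j by (intro member_le_sum) auto
      also have "\<dots> = m q" using mexp by simp
      also have "\<dots> \<le> deg m" unfolding deg_def by (rule member_le_sum) auto
      finally have NNb: "NN (nn j) (r (ii j)) \<le> deg m" .
      show ?thesis
      proof (cases "s = 0")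
        case True
        then show ?thesis using n0 sum_le_NN[of "nn j" "r (ii j)"] NNb by simp
      next
        case False
        then have "nn j s \<le> s * nn j s" by simp
        also have "\<dots> \<le> NN (nn j) (r (ii j))"
          unfolding NN_def using False s by (intro member_le_sum) auto
        finally show ?thesis using NNb by simp
      qed
    qed
    have outside: "nn j s = 0" if "(j, s) \<notin> A" for j s
    proof (rule tz)
      show "j < 1 \<or> k < j \<or> r (ii j) < s" using that by (auto simp: A_def)
    qed
    show "nn \<in> {nn. \<forall>j s. ((j, s) \<notin> A \<longrightarrow> nn j s = 0) \<and> nn j s \<le> deg m}"
      using bound outside by auto
  qed
  moreover have "finite {nn :: nat \<Rightarrow> nat \<Rightarrow> nat. \<forall>j s. ((j, s) \<notin> A \<longrightarrow> nn j s = 0) \<and> nn j s \<le> deg m}"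
    by (rule finite_bounded_funs) (simp add: A_def)
  ultimately show "finite {nn \<in> tuples r ii k. cf (RT k h nn) m \<noteq> 0}" by (rule finite_subset)
qed

end

context L4
begin

lemma sum_ivl_last: "j \<le> k \<Longrightarrow> (\<Sum>l=j+1..Suc k. f l) = f (Suc k) + (\<Sum>l=j+1..k. (f l :: int))"
  by (simp add: add.commute)

lemma prod_ivl_last: "prod f {1..Suc k} = prod f {1..k} * (f (Suc k) :: 'b::comm_monoid_mult)"
  by simp

definition Pr where "Pr k h = (\<Prod>j\<in>{1..k}. Pw (Lm j) (h j))"

definition cv where
  "cv h K v = of_int (gbin (h K) (v 0) v (r (ii K))) * (\<Prod>s=1..r (ii K). z (ii K) s ^ v s)"

lemma TERM:
  assumes v: "v \<in> V (r (ii (Suc k)))" and nn: "nn \<in> tuples r ii k"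
  shows "RT (Suc k) h (nn(Suc k := v))
       = const (cv h (Suc k) v) * YY (\<lambda>m. NN v (r (ii (Suc k))) * av (Suc k) m)
         * RT k (\<lambda>j. h j + int (NN v (r (ii (Suc k)))) * (- E (Suc k) j)) nn"
proof -
  let ?K = "Suc k"
  let ?N = "NN v (r (ii ?K))"
  define h' where "h' j = h j + int ?N * (- E ?K j)" for j
  define nn' where "nn' = nn(?K := v)"
  have nnj: "nn' j = nn j" if "j \<le> k" for j using that by (simp add: nn'_def)
  have gK: "(\<Sum>s=1..r (ii ?K). int s * int (nn' ?K s) * (- E ?K j)) = int ?N * (- E ?K j)" for j
    by (simp add: nn'_def NN_def sum_distrib_right sum_negf)
  have fac: "of_int (gbin (h j + (\<Sum>l=j+1..?K. \<Sum>s=1..r (ii l). int s * int (nn' l s) * (- E l j)))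
                     (nn' j 0) (nn' j) (r (ii j))) * (\<Prod>s=1..r (ii j). z (ii j) s ^ nn' j s)
      = of_int (gbin (h' j + (\<Sum>l=j+1..k. \<Sum>s=1..r (ii l). int s * int (nn l s) * (- E l j)))
                     (nn j 0) (nn j) (r (ii j))) * (\<Prod>s=1..r (ii j). z (ii j) s ^ nn j s)"
    if j: "j \<in> {1..k}" for j
  proof -
    have "(\<Sum>l=j+1..?K. \<Sum>s=1..r (ii l). int s * int (nn' l s) * (- E l j))
        = (\<Sum>s=1..r (ii ?K). int s * int (nn' ?K s) * (- E ?K j)) + (\<Sum>l=j+1..k. \<Sum>s=1..r (ii l). int s * int (nn' l s) * (- E l j))"
      by (rule sum_ivl_last) (use j in simp)
    also have "(\<Sum>l=j+1..k. \<Sum>s=1..r (ii l). int s * int (nn' l s) * (- E l j))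
        = (\<Sum>l=j+1..k. \<Sum>s=1..r (ii l). int s * int (nn l s) * (- E l j))"
      by (rule sum.cong) (auto simp: nnj)
    also note gK
    finally have eq1: "(\<Sum>l=j+1..?K. \<Sum>s=1..r (ii l). int s * int (nn' l s) * (- E l j))
        = int ?N * (- E ?K j) + (\<Sum>l=j+1..k. \<Sum>s=1..r (ii l). int s * int (nn l s) * (- E l j))" .
    have eq2: "h j + (\<Sum>l=j+1..?K. \<Sum>s=1..r (ii l). int s * int (nn' l s) * (- E l j))
        = h' j + (\<Sum>l=j+1..k. \<Sum>s=1..r (ii l). int s * int (nn l s) * (- E l j))"
      unfolding eq1 h'_def by (simp only: add_ac)
    have nj: "nn' j = nn j" using j by (simp add: nnj)
    show ?thesis unfolding eq2 nj ..
  qed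
  have "coefk ?K h nn' = coefk k h' nn * cv h ?K v"
  proof -
    define F where "F j = of_int (gbin (h j + (\<Sum>l=j+1..?K. \<Sum>s=1..r (ii l). int s * int (nn' l s) * (- E l j)))
                     (nn' j 0) (nn' j) (r (ii j))) * (\<Prod>s=1..r (ii j). z (ii j) s ^ nn' j s)" for j
    have "coefk ?K h nn' = prod F {1..?K}" unfolding coefk_def F_def ..
    also have "\<dots> = prod F {1..k} * F ?K" by (rule prod_ivl_last)
    also have "prod F {1..k} = coefk k h' nn"
      unfolding coefk_def F_def by (rule prod.cong[OF refl], rule fac, assumption)
    also have "F ?K = cv h ?K v" by (simp add: F_def cv_def nn'_def)
    finally show ?thesis .
  qed
  moreover have "expk ?K nn' = (\<lambda>m. expk k nn m + ?N * av ?K m)"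
  proof
    fix m
    have "(\<Sum>j=1..k. NN (nn' j) (r (ii j)) * av j m) = (\<Sum>j=1..k. NN (nn j) (r (ii j)) * av j m)"
      by (rule sum.cong) (auto simp: nnj)
    then show "expk ?K nn' m = expk k nn m + ?N * av ?K m"
      by (simp add: expk_def nn'_def)
  qed
  ultimately have "RT ?K h nn' = const (coefk k h' nn * cv h ?K v) * YY (\<lambda>m. expk k nn m + ?N * av ?K m)"
    by (simp add: RT_eq)
  also have "\<dots> = const (cv h ?K v) * YY (\<lambda>m. ?N * av ?K m) * (const (coefk k h' nn) * YY (expk k nn))"
    by (simp add: const_mult YY_def Y_mult[OF xu, symmetric] mult_ac)
  also have "\<dots> = const (cv h ?K v) * YY (\<lambda>m. ?N * av ?K m) * RT k h' nn"
    by (simp add: RT_eq)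
  also have "h' = (\<lambda>j. h j + int ?N * (- E ?K j))" by (rule ext) (simp only: h'_def)
  finally show ?thesis by (simp only: nn'_def)
qed

lemma bij_tuples:
  "bij_betw (\<lambda>p. (snd p)(Suc k := fst p)) (V (r (ii (Suc k))) \<times> tuples r ii k) (tuples r ii (Suc k))"
proof (rule bij_betw_byWitness[where f'="\<lambda>nn. (nn (Suc k), nn(Suc k := (\<lambda>_. 0)))"])
  show "\<forall>p\<in>V (r (ii (Suc k))) \<times> tuples r ii k. (\<lambda>nn. (nn (Suc k), nn(Suc k := (\<lambda>_. 0)))) ((snd p)(Suc k := fst p)) = p"
  proof
    fix p assume p: "p \<in> V (r (ii (Suc k))) \<times> tuples r ii k"
    then have "snd p (Suc k) = (\<lambda>_. 0)" by (auto simp: tuples_def)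
    then show "(\<lambda>nn. (nn (Suc k), nn(Suc k := (\<lambda>_. 0)))) ((snd p)(Suc k := fst p)) = p"
      by (cases p) auto
  qed
  show "\<forall>nn\<in>tuples r ii (Suc k). (\<lambda>p. (snd p)(Suc k := fst p)) ((\<lambda>nn. (nn (Suc k), nn(Suc k := (\<lambda>_. 0)))) nn) = nn"
    by auto
  show "(\<lambda>p. (snd p)(Suc k := fst p)) ` (V (r (ii (Suc k))) \<times> tuples r ii k) \<subseteq> tuples r ii (Suc k)"
  proof
    fix nn' assume "nn' \<in> (\<lambda>p. (snd p)(Suc k := fst p)) ` (V (r (ii (Suc k))) \<times> tuples r ii k)"
    then obtain v nn where v: "v \<in> V (r (ii (Suc k)))" and nn: "nn \<in> tuples r ii k" and e: "nn' = nn(Suc k := v)"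
      by auto
    have H: "\<forall>j s. (j < 1 \<or> k < j \<or> r (ii j) < s) \<longrightarrow> nn j s = 0" using nn unfolding tuples_def by (rule CollectD)
    have Hv: "\<forall>s. r (ii (Suc k)) < s \<longrightarrow> v s = 0" using v unfolding V_def by (rule CollectD)
    have "nn' j s = 0" if "j < 1 \<or> Suc k < j \<or> r (ii j) < s" for j s
    proof (cases "j = Suc k")
      case True
      then show ?thesis using that Hv e by auto
    next
      case False
      then have "j < 1 \<or> k < j \<or> r (ii j) < s" using that by auto
      then show ?thesis using H False e by auto
    qed
    then show "nn' \<in> tuples r ii (Suc k)" unfolding tuples_def by blast
  qed
  show "(\<lambda>nn. (nn (Suc k), nn(Suc k := (\<lambda>_. 0)))) ` tuples r ii (Suc k) \<subseteq> V (r (ii (Suc k))) \<times> tuples r ii k"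
  proof
    fix p assume "p \<in> (\<lambda>nn. (nn (Suc k), nn(Suc k := (\<lambda>_. 0)))) ` tuples r ii (Suc k)"
    then obtain nn where nn: "nn \<in> tuples r ii (Suc k)" and e: "p = (nn (Suc k), nn(Suc k := (\<lambda>_. 0)))" by auto
    have H: "\<forall>j s. (j < 1 \<or> Suc k < j \<or> r (ii j) < s) \<longrightarrow> nn j s = 0" using nn unfolding tuples_def by (rule CollectD)
    have "nn (Suc k) s = 0" if "r (ii (Suc k)) < s" for s using H that by auto
    then have "nn (Suc k) \<in> V (r (ii (Suc k)))" by (auto simp: V_def)
    moreover have "(nn(Suc k := (\<lambda>_. 0))) j s = 0" if "j < 1 \<or> k < j \<or> r (ii j) < s" for j s
    proof (cases "j = Suc k")
      case False
      then have "j < 1 \<or> Suc k < j \<or> r (ii j) < s" using that by auto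
      then show ?thesis using H False by auto
    qed simp
    then have "nn(Suc k := (\<lambda>_. 0)) \<in> tuples r ii k" unfolding tuples_def by blast
    ultimately show "p \<in> V (r (ii (Suc k))) \<times> tuples r ii k" using e by simp
  qed
qed

end

context L4
begin

lemma STEP_W:
  assumes IH0: "\<And>i. 1 \<le> i \<Longrightarrow> i \<le> k \<Longrightarrow> cf (Lm i) z0 = 1"
  shows "Pr k h * (const c * WW (Suc k) ^ N)
       = const c * YY (\<lambda>m. N * av (Suc k) m) * Pr k (\<lambda>j. h j + int N * (- E (Suc k) j))"
proof -
  have "WW (Suc k) ^ N = YY (av (Suc k)) ^ N * (\<Prod>j\<in>{1..k}. Pw (Lm j) (- E (Suc k) j) ^ N)"
    by (simp add: WW_def power_mult_distrib prod_power_distrib)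
  also have "(\<Prod>j\<in>{1..k}. Pw (Lm j) (- E (Suc k) j) ^ N) = (\<Prod>j\<in>{1..k}. Pw (Lm j) (int N * (- E (Suc k) j)))"
    by (rule prod.cong[OF refl]) (rule Pw_mult, use IH0 in auto)
  also have "YY (av (Suc k)) ^ N = YY (\<lambda>m. N * av (Suc k) m)"
    by (simp add: YY_def Y_power[OF xu])
  finally have W: "WW (Suc k) ^ N = YY (\<lambda>m. N * av (Suc k) m) * (\<Prod>j\<in>{1..k}. Pw (Lm j) (int N * (- E (Suc k) j)))" .
  have "Pr k h * (\<Prod>j\<in>{1..k}. Pw (Lm j) (int N * (- E (Suc k) j)))
      = (\<Prod>j\<in>{1..k}. Pw (Lm j) (h j) * Pw (Lm j) (int N * (- E (Suc k) j)))"
    by (simp add: Pr_def prod.distrib)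
  also have "\<dots> = Pr k (\<lambda>j. h j + int N * (- E (Suc k) j))"
    unfolding Pr_def by (rule prod.cong[OF refl]) (rule Pw_add, use IH0 in auto)
  finally have P: "Pr k h * (\<Prod>j\<in>{1..k}. Pw (Lm j) (int N * (- E (Suc k) j))) = Pr k (\<lambda>j. h j + int N * (- E (Suc k) j))" .
  show ?thesis unfolding W P[symmetric] by (simp only: mult_ac)
qed

lemma tuples_0: "tuples r ii 0 = {\<lambda>_ _. 0}"
proof
  show "tuples r ii 0 \<subseteq> {\<lambda>_ _. 0}"
  proof
    fix nn assume "nn \<in> tuples r ii 0"
    then have TH: "\<forall>j s. (j < 1 \<or> 0 < j \<or> r (ii j) < s) \<longrightarrow> nn j s = 0"
      unfolding tuples_def by (rule CollectD)
    have "nn j s = 0" for j s using TH[rule_format, of j s] by (cases j) auto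
    then show "nn \<in> {\<lambda>_ _. 0}" by auto
  qed
  show "{\<lambda>_ _. 0} \<subseteq> tuples r ii 0" by (auto simp: tuples_def)
qed

lemma MAIN:
  assumes "SC k"
  shows "Pr k h = psum (tuples r ii k) (RT k h)"
  using assms
proof (induction k arbitrary: h)
  case 0
  have "psum (tuples r ii 0) (RT 0 h) = RT 0 h (\<lambda>_ _. 0)"
    unfolding tuples_0 by (simp add: psum_finite)
  also have "\<dots> = 1" by (simp add: RT_eq coefk_def expk_def YY_def Y_zero)
  finally show ?case by (simp add: Pr_def)
next
  case (Suc k)
  let ?K = "Suc k"
  let ?R = "r (ii ?K)"
  have SCk: "SC k" using Suc.prems by (simp add: SC_def)
  have IH0: "\<And>i. 1 \<le> i \<Longrightarrow> i \<le> k \<Longrightarrow> cf (Lm i) z0 = 1" using Lm_0[OF SCk] by blast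
  have scK: "sign_coherent (cvec r B ii ?K)" using Suc.prems by (simp add: SC_def)
  have W0: "cf (WW ?K) z0 = 0" by (rule WW_0[OF scK])
  have zz0: "z (ii ?K) 0 = 1" using zend by simp
  note EX = expand_L[OF W0 zz0 Lm_Suc[OF IH0], of "h ?K"]
  have eqc: "(\<lambda>v. const (of_int (gbin (h ?K) (v 0) v ?R) * (\<Prod>s=1..?R. z (ii ?K) s ^ v s)) * WW ?K ^ NN v ?R)
      = (\<lambda>v. const (cv h ?K v) * WW ?K ^ NN v ?R)" by (simp add: cv_def)
  have EX1: "Pw (Lm ?K) (h ?K) = psum (V ?R) (\<lambda>v. const (cv h ?K v) * WW ?K ^ NN v ?R)"
    using EX(1) unfolding eqc .
  have EX2: "lf (V ?R) (\<lambda>v. const (cv h ?K v) * WW ?K ^ NN v ?R)"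
    using EX(2) unfolding eqc .
  define g :: "(nat \<Rightarrow> nat) \<times> (nat \<Rightarrow> nat \<Rightarrow> nat) \<Rightarrow> nat \<Rightarrow> nat \<Rightarrow> nat"
    where "g p = (snd p)(?K := fst p)" for p
  have bij: "bij_betw g (V ?R \<times> tuples r ii k) (tuples r ii ?K)"
    unfolding g_def by (rule bij_tuples)
  have lfK: "lf (tuples r ii ?K) (RT ?K h)" by (rule FIN[OF Suc.prems])
  have lfS: "lf (V ?R \<times> tuples r ii k) (\<lambda>(v, nn). RT ?K h (nn(?K := v)))"
  proof -
    have "lf (V ?R \<times> tuples r ii k) (\<lambda>p. RT ?K h (g p))"
      using lfK by (simp only: psum_reindex(2)[OF bij])
    moreover have "(\<lambda>p. RT ?K h (g p)) = (\<lambda>(v, nn). RT ?K h (nn(?K := v)))"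
      by (auto simp: g_def fun_eq_iff)
    ultimately show ?thesis by simp
  qed
  have "Pr ?K h = Pr k h * Pw (Lm ?K) (h ?K)" by (simp add: Pr_def prod_ivl_last)
  also have "\<dots> = psum (V ?R) (\<lambda>v. Pr k h * (const (cv h ?K v) * WW ?K ^ NN v ?R))"
    unfolding EX1 by (rule psum_mult_left(2)[OF EX2])
  also have "\<dots> = psum (V ?R) (\<lambda>v. psum (tuples r ii k) (\<lambda>nn. RT ?K h (nn(?K := v))))"
  proof (rule psum_cong)
    fix v assume v: "v \<in> V ?R"
    let ?h' = "\<lambda>j. h j + int (NN v ?R) * (- E ?K j)"
    have "Pr k h * (const (cv h ?K v) * WW ?K ^ NN v ?R)
        = const (cv h ?K v) * YY (\<lambda>m. NN v ?R * av ?K m) * Pr k ?h'"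
      by (rule STEP_W[OF IH0])
    also have "\<dots> = const (cv h ?K v) * YY (\<lambda>m. NN v ?R * av ?K m) * psum (tuples r ii k) (RT k ?h')"
      by (simp only: Suc.IH[OF SCk])
    also have "\<dots> = psum (tuples r ii k) (\<lambda>nn. const (cv h ?K v) * YY (\<lambda>m. NN v ?R * av ?K m) * RT k ?h' nn)"
      by (rule psum_mult_left(2)[OF FIN[OF SCk]])
    also have "\<dots> = psum (tuples r ii k) (\<lambda>nn. RT ?K h (nn(?K := v)))"
      by (rule psum_cong) (rule TERM[OF v, symmetric])
    finally show "Pr k h * (const (cv h ?K v) * WW ?K ^ NN v ?R) = psum (tuples r ii k) (\<lambda>nn. RT ?K h (nn(?K := v)))" .
  qed
  also have "\<dots> = psum (V ?R \<times> tuples r ii k) (\<lambda>(v, nn). RT ?K h (nn(?K := v)))"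
    by (rule psum_Sigma(1)[symmetric, OF lfS])
  also have "\<dots> = psum (V ?R \<times> tuples r ii k) (\<lambda>p. RT ?K h (g p))"
    by (rule psum_cong) (auto simp: g_def)
  also have "\<dots> = psum (tuples r ii ?K) (RT ?K h)"
    by (rule psum_reindex(1)[OF bij, symmetric])
  finally show ?case .
qed

end

theorem lemmaL4:
  fixes r :: "'n::finite \<Rightarrow> nat"
    and B :: "'n \<Rightarrow> 'n \<Rightarrow> int"
    and D0 :: "'n \<Rightarrow> int"
    and x xi :: "'n \<Rightarrow> 'a::comm_ring_1"
    and z :: "'n \<Rightarrow> nat \<Rightarrow> 'a"
    and ii :: "nat \<Rightarrow> 'n"
    and k :: nat
    and h :: "nat \<Rightarrow> int"
  assumes r_pos: "\<forall>i. 0 < r i"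
    and D0_pos: "\<forall>i. 0 < D0 i"
    and D0RB_skew: "\<forall>i j. D0 i * int (r i) * B i j = - (D0 j * int (r j) * B j i)"
    and x_unit: "\<forall>j. x j * xi j = 1"
    and z_ends: "\<forall>i. z i 0 = 1 \<and> z i (r i) = 1"
    and z_sym: "\<forall>i s. s \<le> r i \<longrightarrow> z i s = z i (r i - s)"
    and path: "\<forall>j. 1 \<le> j \<and> j < k \<longrightarrow> ii j \<noteq> ii (Suc j)"
    and sign_coh: "\<forall>j. 1 \<le> j \<and> j \<le> k \<longrightarrow> sign_coherent (cvec r B ii j)"
    and pair_int: "\<forall>l j. 1 \<le> j \<and> j < l \<and> l \<le> k \<longrightarrow> Qpair D0 r B ii l j \<in> \<int>"
  shows "(\<forall>mm. finite {nn \<in> tuples r ii k. rhs_term D0 r B ii x xi z k h nn mm \<noteq> 0})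
       \<and> ps_prod_upto (\<lambda>j. ps_powi (Lser D0 r B ii x xi z j) (h j)) k
         = (\<lambda>mm. Sum_any (\<lambda>nn. if nn \<in> tuples r ii k
                                  then rhs_term D0 r B ii x xi z k h nn mm else 0))"
proof -
  interpret L4 D0 r B ii x xi z
    using x_unit z_ends by unfold_locales auto
  have SCk: "SC k" using sign_coh by (simp add: SC_def)
  have lfk: "lf (tuples r ii k) (RT k h)" by (rule FIN[OF SCk])
  have main: "Pr k h = psum (tuples r ii k) (RT k h)" by (rule MAIN[OF SCk])
  have cfRT: "cf (RT k h nn) = rhs_term D0 r B ii x xi z k h nn" for nn
    by (simp add: RT_def)
  have lhs: "ps_prod_upto (\<lambda>j. ps_powi (Lser D0 r B ii x xi z j) (h j)) k = cf (Pr k h)"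
  proof -
    have "ps_prod_upto (\<lambda>j. ps_powi (Lser D0 r B ii x xi z j) (h j)) k
        = cf (\<Prod>j\<in>{1..k}. Abs_mp (ps_powi (Lser D0 r B ii x xi z j) (h j)))"
      by (rule ps_prod_upto_cf)
    also have "(\<Prod>j\<in>{1..k}. Abs_mp (ps_powi (Lser D0 r B ii x xi z j) (h j))) = Pr k h"
      unfolding Pr_def
    proof (rule prod.cong[OF refl])
      fix j assume "j \<in> {1..k}"
      then have "cf (Lm j) z0 = 1" using Lm_0[OF SCk] by auto
      then have "ps_powi (cf (Lm j)) (h j) = cf (Pw (Lm j) (h j))" by (rule ps_powi_Pw)
      then show "Abs_mp (ps_powi (Lser D0 r B ii x xi z j) (h j)) = Pw (Lm j) (h j)"
        by (simp add: Lm_def Rep_mp_inverse)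
    qed
    finally show ?thesis .
  qed
  have fin: "finite {nn \<in> tuples r ii k. rhs_term D0 r B ii x xi z k h nn mm \<noteq> 0}" for mm
    using lfk unfolding lf_def cfRT by blast
  show ?thesis
  proof
    show "\<forall>mm. finite {nn \<in> tuples r ii k. rhs_term D0 r B ii x xi z k h nn mm \<noteq> 0}"
      using fin by blast
    show "ps_prod_upto (\<lambda>j. ps_powi (Lser D0 r B ii x xi z j) (h j)) k
        = (\<lambda>mm. Sum_any (\<lambda>nn. if nn \<in> tuples r ii k then rhs_term D0 r B ii x xi z k h nn mm else 0))"
    proof
      fix mm
      have set_eq: "{nn. (if nn \<in> tuples r ii k then rhs_term D0 r B ii x xi z k h nn mm else 0) \<noteq> 0}
          = {nn \<in> tuples r ii k. rhs_term D0 r B ii x xi z k h nn mm \<noteq> 0}" by auto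
      have "ps_prod_upto (\<lambda>j. ps_powi (Lser D0 r B ii x xi z j) (h j)) k mm = cf (psum (tuples r ii k) (RT k h)) mm"
        using lhs main by simp
      also have "\<dots> = (\<Sum>nn\<in>{nn \<in> tuples r ii k. rhs_term D0 r B ii x xi z k h nn mm \<noteq> 0}. rhs_term D0 r B ii x xi z k h nn mm)"
        by (simp add: psum_def cfRT)
      also have "\<dots> = (\<Sum>nn\<in>{nn. (if nn \<in> tuples r ii k then rhs_term D0 r B ii x xi z k h nn mm else 0) \<noteq> 0}.
                         (if nn \<in> tuples r ii k then rhs_term D0 r B ii x xi z k h nn mm else 0))"
        unfolding set_eq by (rule sum.cong) auto
      also have "\<dots> = Sum_any (\<lambda>nn. if nn \<in> tuples r ii k then rhs_term D0 r B ii x xi z k h nn mm else 0)"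
        by (rule Sum_any.expand_set[symmetric])
      finally show "ps_prod_upto (\<lambda>j. ps_powi (Lser D0 r B ii x xi z j) (h j)) k mm
          = Sum_any (\<lambda>nn. if nn \<in> tuples r ii k then rhs_term D0 r B ii x xi z k h nn mm else 0)" .
    qed
  qed
qed

end
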